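(* Let $\alpha>0$, $p>0$, $0<\ell<\infty$, and let $f$ be a non-negative measurable function on $(\ell,\infty)$. (a) If $p>1$, then $$\alpha^{p-1}\Big(\int_\ell^\infty f(x)dx\Big)^p+\alpha^p\int_\ell^\infty\Big[\log\frac{xe}{\ell}\Big]^{\alpha p-1}\Big(\int_x^\infty f(y)dy\Big)^p\frac{dx}{x}\le\int_\ell^\infty x^p\Big[\log\frac{xe}{\ell}\Big]^{(1+\alpha)p-1}f^p(x)\frac{dx}{x},$$ and both constants $\alpha^{p-1}$ and $\alpha^p$ are sharp. (b) If $0<p\le1$, the inequality holds in the reversed direction and both constants $\alpha^{p-1}$ and $\alpha^p$ are sharp. *)

theory Defs
  imports "HOL-Analysis.Analysis"
begin

definition epowr :: "ennreal \<Rightarrow> real \<Rightarrow> ennreal" where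
  "epowr a r = (if a = \<infinity> then \<infinity> else ennreal (enn2real a powr r))"

definition admissible :: "real \<Rightarrow> (real \<Rightarrow> real) \<Rightarrow> bool" where
  "admissible l f \<longleftrightarrow> set_borel_measurable lebesgue {l<..} f \<and> (\<forall>x>l. 0 \<le> f x)"

definition hardy_lhs :: "real \<Rightarrow> real \<Rightarrow> real \<Rightarrow> real \<Rightarrow> real \<Rightarrow> (real \<Rightarrow> real) \<Rightarrow> ennreal" where
  "hardy_lhs c1 c2 \<alpha> p l f =
     ennreal c1 * epowr (\<integral>\<^sup>+ x\<in>{l<..}. ennreal (f x) \<partial>lebesgue) p
   + ennreal c2 * (\<integral>\<^sup>+ x\<in>{l<..}. ennreal (ln (x * exp 1 / l) powr (\<alpha> * p - 1) / x)
         * epowr (\<integral>\<^sup>+ y\<in>{x<..}. ennreal (f y) \<partial>lebesgue) p \<partial>lebesgue)"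

definition hardy_rhs :: "real \<Rightarrow> real \<Rightarrow> real \<Rightarrow> (real \<Rightarrow> real) \<Rightarrow> ennreal" where
  "hardy_rhs \<alpha> p l f =
     (\<integral>\<^sup>+ x\<in>{l<..}. ennreal (x powr p * ln (x * exp 1 / l) powr ((1 + \<alpha>) * p - 1)
         * f x powr p / x) \<partial>lebesgue)"

end

theory Submission
  imports Defs
begin

lemma nn_FTC_einterval:
  fixes f F :: "real \<Rightarrow> real" and a b :: ereal
  assumes "a < b"
  assumes F: "\<And>x. a < ereal x \<Longrightarrow> ereal x < b \<Longrightarrow> DERIV F x :> f x"
  assumes f: "\<And>x. a < ereal x \<Longrightarrow> ereal x < b \<Longrightarrow> isCont f x"
  assumes nn: "\<And>x. a < ereal x \<Longrightarrow> ereal x < b \<Longrightarrow> 0 \<le> f x"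
  assumes A: "((F \<circ> real_of_ereal) \<longlongrightarrow> A) (at_right a)"
  assumes B: "((F \<circ> real_of_ereal) \<longlongrightarrow> B) (at_left b)"
  shows "(\<integral>\<^sup>+x. ennreal (f x) * indicator (einterval a b) x \<partial>lborel) = ennreal (B - A)"
proof -
  have i: "set_integrable lborel (einterval a b) f" and e: "(LBINT x=a..b. f x) = B - A"
    using interval_integral_FTC_nonneg[OF assms(1) F f _ A B] nn by auto
  have "(\<integral>\<^sup>+x. ennreal (f x) * indicator (einterval a b) x \<partial>lborel)
      = (\<integral>\<^sup>+x. ennreal (indicator (einterval a b) x * f x) \<partial>lborel)"
    by (intro nn_integral_cong) (auto split: split_indicator)
  also have "\<dots> = ennreal (\<integral>x. indicator (einterval a b) x * f x \<partial>lborel)"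
    using i nn unfolding set_integrable_def
    by (intro nn_integral_eq_integral) (auto split: split_indicator simp: einterval_iff)
  also have "(\<integral>x. indicator (einterval a b) x * f x \<partial>lborel) = B - A"
    using e assms(1) unfolding interval_lebesgue_integral_def set_lebesgue_integral_def by (simp add: less_imp_le)
  finally show ?thesis .
qed

lemma nn_FTC_Ioo:
  fixes f F :: "real \<Rightarrow> real" and a b :: real
  assumes "a < b"
  assumes F: "\<And>x. a < x \<Longrightarrow> x < b \<Longrightarrow> DERIV F x :> f x"
  assumes f: "\<And>x. a < x \<Longrightarrow> x < b \<Longrightarrow> isCont f x"
  assumes nn: "\<And>x. a < x \<Longrightarrow> x < b \<Longrightarrow> 0 \<le> f x"
  assumes A: "(F \<longlongrightarrow> A) (at_right a)"
  assumes B: "(F \<longlongrightarrow> B) (at_left b)"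
  shows "(\<integral>\<^sup>+x\<in>{a<..<b}. ennreal (f x) \<partial>lborel) = ennreal (B - A)"
  using nn_FTC_einterval[of "ereal a" "ereal b" F f A B] assms
  by (simp add: ereal_tendsto_simps)

lemma nn_FTC_Ioi:
  fixes f F :: "real \<Rightarrow> real" and a :: real
  assumes F: "\<And>x. a < x \<Longrightarrow> DERIV F x :> f x"
  assumes f: "\<And>x. a < x \<Longrightarrow> isCont f x"
  assumes nn: "\<And>x. a < x \<Longrightarrow> 0 \<le> f x"
  assumes A: "(F \<longlongrightarrow> A) (at_right a)"
  assumes B: "(F \<longlongrightarrow> B) at_top"
  shows "(\<integral>\<^sup>+x\<in>{a<..}. ennreal (f x) \<partial>lborel) = ennreal (B - A)"
  using nn_FTC_einterval[of "ereal a" "\<infinity>" F f A B] assms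
  by (simp add: ereal_tendsto_simps)


lemma pred_gt_pair[measurable]: "Measurable.pred (borel \<Otimes>\<^sub>M borel) (\<lambda>x::real\<times>real. snd x \<in> {fst x<..})"
  unfolding greaterThan_iff by measurable

lemma pred_Ioo_pair[measurable]: "Measurable.pred (borel \<Otimes>\<^sub>M borel) (\<lambda>x::real\<times>real. fst x \<in> {a<..<snd x})"
  unfolding greaterThanLessThan_iff by measurable

lemma tonelli_tail:
  fixes u v :: "real \<Rightarrow> ennreal"
  assumes [measurable]: "u \<in> borel_measurable borel" "v \<in> borel_measurable borel"
  shows "(\<integral>\<^sup>+x\<in>{a<..}. u x * (\<integral>\<^sup>+y\<in>{x<..}. v y \<partial>lborel) \<partial>lborel)
       = (\<integral>\<^sup>+y\<in>{a<..}. v y * (\<integral>\<^sup>+x\<in>{a<..<y}. u x \<partial>lborel) \<partial>lborel)"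
proof -
  have "(\<integral>\<^sup>+x\<in>{a<..}. u x * (\<integral>\<^sup>+y\<in>{x<..}. v y \<partial>lborel) \<partial>lborel)
      = (\<integral>\<^sup>+x. \<integral>\<^sup>+y. u x * indicator {a<..} x * (v y * indicator {x<..} y) \<partial>lborel \<partial>lborel)"
    by (intro nn_integral_cong, subst nn_integral_cmult) (auto simp: mult_ac)
  also have "\<dots> = (\<integral>\<^sup>+y. \<integral>\<^sup>+x. u x * indicator {a<..} x * (v y * indicator {x<..} y) \<partial>lborel \<partial>lborel)"
    by (rule lborel_pair.Fubini'[symmetric]) measurable
  also have "\<dots> = (\<integral>\<^sup>+y. \<integral>\<^sup>+x. v y * indicator {a<..} y * (u x * indicator {a<..<y} x) \<partial>lborel \<partial>lborel)"
    by (intro nn_integral_cong) (auto split: split_indicator simp: mult.commute)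
  also have "\<dots> = (\<integral>\<^sup>+y\<in>{a<..}. v y * (\<integral>\<^sup>+x\<in>{a<..<y}. u x \<partial>lborel) \<partial>lborel)"
    by (intro nn_integral_cong, subst nn_integral_cmult) (auto simp: mult_ac)
  finally show ?thesis .
qed

definition Gf :: "(real \<Rightarrow> real) \<Rightarrow> real \<Rightarrow> ennreal" where
  "Gf h x = (\<integral>\<^sup>+y\<in>{x<..}. ennreal (h y) \<partial>lborel)"

lemma Gf_antimono: "x \<le> y \<Longrightarrow> Gf h y \<le> Gf h x"
  unfolding Gf_def by (intro nn_integral_mono) (auto split: split_indicator)

lemma Gf_meas[measurable]:
  assumes [measurable]: "h \<in> borel_measurable borel"
  shows "Gf h \<in> borel_measurable borel"
proof -
  have "(\<lambda>x. \<integral>\<^sup>+y. ennreal (h y) * indicator {x<..} y \<partial>lborel) \<in> borel_measurable borel"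
    by measurable
  then show ?thesis unfolding Gf_def by simp
qed

lemma Gf_right_cont:
  assumes [measurable]: "h \<in> borel_measurable borel"
  shows "Gf h t = (SUP n. Gf h (t + 1 / Suc n))"
proof -
  have "Gf h t = (\<integral>\<^sup>+y. (SUP n. ennreal (h y) * indicator {t + 1/Suc n<..} y) \<partial>lborel)"
    unfolding Gf_def
  proof (intro nn_integral_cong)
    fix y
    show "ennreal (h y) * indicator {t<..} y = (SUP n. ennreal (h y) * indicator {t + 1/Suc n<..} y)"
    proof (cases "t < y")
      case True
      then obtain n where n: "1 / Suc n < y - t"
        using nat_approx_posE[of "y - t"] by auto
      show ?thesis
      proof (rule antisym)
        show "ennreal (h y) * indicator {t<..} y \<le> (SUP n. ennreal (h y) * indicator {t + 1/Suc n<..} y)"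
          by (rule SUP_upper2[of n]) (use n True in \<open>auto split: split_indicator\<close>)
        show "(SUP n. ennreal (h y) * indicator {t + 1/Suc n<..} y) \<le> ennreal (h y) * indicator {t<..} y"
          by (rule SUP_least) (auto split: split_indicator, smt (verit) of_nat_0_le_iff divide_nonneg_nonneg)
      qed
    next
      case False
      then have "\<And>n. \<not> t + 1/Suc n < y" by (smt (verit) of_nat_0_le_iff divide_nonneg_nonneg)
      with False show ?thesis by simp
    qed
  qed
  also have "\<dots> = (SUP n. Gf h (t + 1 / Suc n))"
    unfolding Gf_def
  proof (rule nn_integral_monotone_convergence_SUP)
    show "incseq (\<lambda>n y. ennreal (h y) * indicator {t + 1/Suc n<..} y)"
    proof (rule incseq_SucI, rule le_funI)
      fix n y
      have "t + 1 / Suc (Suc n) \<le> t + 1 / Suc n" by (simp add: frac_le)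
      then show "ennreal (h y) * indicator {t + 1/Suc n<..} y \<le> ennreal (h y) * indicator {t + 1/Suc (Suc n)<..} y"
        by (auto split: split_indicator)
    qed
  qed measurable
  finally show ?thesis .
qed

lemma Gf_upper_set:
  assumes [measurable]: "h \<in> borel_measurable borel" and hnn: "\<And>x. 0 \<le> h x"
  assumes T[measurable]: "T \<in> sets borel" and bdd: "bdd_below T"
    and up: "\<And>s s'. s \<in> T \<Longrightarrow> s \<le> s' \<Longrightarrow> s' \<in> T"
    and le: "\<And>s. s \<in> T \<Longrightarrow> Gf h s \<le> u"
  shows "(\<integral>\<^sup>+y\<in>T. ennreal (h y) \<partial>lborel) \<le> u"
proof (cases "T = {}")
  case True then show ?thesis by simp
next
  case False
  define t0 where "t0 = Inf T"
  have sub: "T \<subseteq> {t0..}" using bdd by (auto simp: t0_def intro: cInf_lower)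
  have "(\<integral>\<^sup>+y\<in>T. ennreal (h y) \<partial>lborel) \<le> (\<integral>\<^sup>+y\<in>{t0..}. ennreal (h y) \<partial>lborel)"
    using sub by (intro nn_integral_mono) (auto split: split_indicator)
  also have "\<dots> = Gf h t0"
    unfolding Gf_def
    by (intro nn_integral_cong_AE, use AE_lborel_singleton[of t0] in eventually_elim)
       (auto split: split_indicator)
  also have "\<dots> = (SUP n. Gf h (t0 + 1 / Suc n))" by (rule Gf_right_cont) simp
  also have "\<dots> \<le> u"
  proof (rule SUP_least)
    fix n :: nat
    have "\<exists>s\<in>T. s < t0 + 1 / Suc n"
      unfolding t0_def using False by (intro cInf_lessD) auto
    then obtain s where "s \<in> T" "s < t0 + 1/Suc n" by auto
    then have "Gf h (t0 + 1 / Suc n) \<le> Gf h s" by (intro Gf_antimono) simp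
    also have "\<dots> \<le> u" using le \<open>s \<in> T\<close> by simp
    finally show "Gf h (t0 + 1 / Suc n) \<le> u" .
  qed
  finally show ?thesis .
qed

lemma powr_integral_0:
  fixes r g :: real
  assumes "r > 0" "g > 0"
  shows "(\<integral>\<^sup>+u\<in>{0<..<g}. ennreal (r * u powr (r - 1)) \<partial>lborel) = ennreal (g powr r)"
proof -
  have "(\<integral>\<^sup>+u\<in>{0<..<g}. ennreal (r * u powr (r - 1)) \<partial>lborel) = ennreal (g powr r - 0)"
  proof (rule nn_FTC_Ioo[where F="\<lambda>u. u powr r"])
    show "((\<lambda>u. u powr r) \<longlongrightarrow> 0) (at_right 0)"
      using assms by (intro tendsto_zero_powrI) (auto simp: eventually_at_right_less  eventually_at_filter)
    show "((\<lambda>u. u powr r) \<longlongrightarrow> g powr r) (at_left g)"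
      using assms by (intro tendsto_intros) auto
  qed (use assms in \<open>auto intro!: derivative_eq_intros continuous_intros\<close>)
  then show ?thesis by simp
qed

lemma Gf_fin_ge:
  assumes "Gf h x < \<infinity>" "x \<le> s"
  shows "Gf h s = ennreal (enn2real (Gf h s))" "enn2real (Gf h s) \<le> enn2real (Gf h x)"
proof -
  have "Gf h s \<le> Gf h x" using assms Gf_antimono by blast
  then have "Gf h s < \<infinity>" using assms by (simp add: le_less_trans)
  then show "Gf h s = ennreal (enn2real (Gf h s))" by simp
  show "enn2real (Gf h s) \<le> enn2real (Gf h x)"
    using \<open>Gf h s \<le> Gf h x\<close> assms by (intro enn2real_mono) auto
qed

lemma inner_bound:
  assumes hm[measurable]: "h \<in> borel_measurable borel" and hnn: "\<And>x. 0 \<le> h x"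
  assumes fin: "Gf h x < \<infinity>" and u: "0 \<le> u"
  shows "ennreal (enn2real (Gf h x) - u) \<le>
     (\<integral>\<^sup>+s\<in>{x<..}. ennreal (h s) * (if u < enn2real (Gf h s) then 1 else 0) \<partial>lborel)"
proof -
  define Gr where "Gr s = enn2real (Gf h s)" for s
  have [measurable]: "Gr \<in> borel_measurable borel" unfolding Gr_def by measurable
  define T where "T = {s. x < s \<and> Gr s \<le> u}"
  have [measurable]: "T \<in> sets borel" unfolding T_def by measurable
  have "Gf h x = (\<integral>\<^sup>+s. ennreal (h s) * indicator {x<..} s * (if u < Gr s then 1 else 0)
                   + ennreal (h s) * indicator T s \<partial>lborel)"
    unfolding Gf_def T_def by (intro nn_integral_cong) (auto split: split_indicator)
  also have "\<dots> = (\<integral>\<^sup>+s\<in>{x<..}. ennreal (h s) * (if u < Gr s then 1 else 0) \<partial>lborel)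
                 + (\<integral>\<^sup>+s\<in>T. ennreal (h s) \<partial>lborel)"
    by (subst nn_integral_add) (auto simp: mult_ac)
  also have "(\<integral>\<^sup>+s\<in>T. ennreal (h s) \<partial>lborel) \<le> ennreal u"
  proof (rule Gf_upper_set[OF hm hnn])
    show "bdd_below T" unfolding T_def by (auto intro!: bdd_belowI[of _ x])
    show "s' \<in> T" if "s \<in> T" "s \<le> s'" for s s'
    proof -
      have "Gf h s < \<infinity>" using that fin Gf_antimono[of x s h] unfolding T_def
        by (auto simp: le_less_trans)
      have "Gr s' \<le> Gr s" unfolding Gr_def using Gf_fin_ge(2)[OF \<open>Gf h s < \<infinity>\<close> \<open>s \<le> s'\<close>] .
      then show ?thesis using that unfolding T_def by auto
    qed
    show "Gf h s \<le> ennreal u" if "s \<in> T" for s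
      using that Gf_fin_ge(1)[OF fin, of s] unfolding T_def Gr_def
      by (metis (mono_tags, lifting) ennreal_leI less_imp_le mem_Collect_eq)
  qed measurable
  finally have *: "ennreal (Gr x) \<le> (\<integral>\<^sup>+s\<in>{x<..}. ennreal (h s) * (if u < Gr s then 1 else 0) \<partial>lborel) + ennreal u"
    using Gf_fin_ge(1)[OF fin order_refl] unfolding Gr_def by (simp add: add_left_mono)
  show ?thesis
    unfolding Gr_def[symmetric]
    using * u by (simp add: ennreal_minus[symmetric] ennreal_minus_le_iff add.commute)
qed

lemma layer_ge:
  assumes hm[measurable]: "h \<in> borel_measurable borel" and hnn: "\<And>x. 0 \<le> h x"
  assumes fin: "Gf h x < \<infinity>" and p: "p > 1"
  shows "ennreal (enn2real (Gf h x) powr p) \<le>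
     (\<integral>\<^sup>+s\<in>{x<..}. ennreal (p * enn2real (Gf h s) powr (p - 1) * h s) \<partial>lborel)"
proof -
  define Gr where "Gr s = enn2real (Gf h s)" for s
  have [measurable]: "Gr \<in> borel_measurable borel" unfolding Gr_def by measurable
  define g where "g = Gr x"
  have g0: "0 \<le> g" unfolding g_def Gr_def by simp
  have Grs: "Gr s \<le> g" "0 \<le> Gr s" if "x \<le> s" for s
    using Gf_fin_ge(2)[OF fin that] unfolding Gr_def g_def by auto
  show ?thesis
  proof (cases "g = 0")
    case True then show ?thesis unfolding g_def Gr_def by simp
  next
    case False
    then have gpos: "g > 0" using g0 by simp
    have "ennreal (g powr p) = (\<integral>\<^sup>+u\<in>{0<..<g}. ennreal ((p - 1) * u powr (p - 2) * (p * (g - u))) \<partial>lborel)"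
    proof -
      have "(\<integral>\<^sup>+u\<in>{0<..<g}. ennreal ((p - 1) * u powr (p - 2) * (p * (g - u))) \<partial>lborel)
            = ennreal (g powr p - 0)"
      proof (rule nn_FTC_Ioo[where F="\<lambda>u. p * g * u powr (p - 1) - (p - 1) * u powr p"])
        show "((\<lambda>u. p * g * u powr (p - 1) - (p - 1) * u powr p) \<longlongrightarrow> 0) (at_right 0)"
        proof -
          have "((\<lambda>u. p * g * u powr (p - 1) - (p - 1) * u powr p) \<longlongrightarrow> p * g * 0 - (p - 1) * 0) (at_right 0)"
            using p by (intro tendsto_intros tendsto_zero_powrI)
               (auto simp: eventually_at_right_less eventually_at_filter)
          then show ?thesis by simp
        qed
        show "((\<lambda>u. p * g * u powr (p - 1) - (p - 1) * u powr p) \<longlongrightarrow> g powr p) (at_left g)"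
        proof -
          have "((\<lambda>u. p * g * u powr (p - 1) - (p - 1) * u powr p) \<longlongrightarrow> p * g * g powr (p - 1) - (p - 1) * g powr p) (at_left g)"
            using gpos by (intro tendsto_intros) auto
          moreover have "p * g * g powr (p - 1) - (p - 1) * g powr p = g powr p"
            using gpos by (simp add: powr_diff field_simps)
          ultimately show ?thesis by simp
        qed
        show "DERIV (\<lambda>u. p * g * u powr (p - 1) - (p - 1) * u powr p) u :> (p - 1) * u powr (p - 2) * (p * (g - u))"
          if "0 < u" "u < g" for u
        proof -
          have "DERIV (\<lambda>u. p * g * u powr (p - 1) - (p - 1) * u powr p) u :>
                 p * g * ((p - 1) * u powr (p - 1 - 1)) - (p - 1) * (p * u powr (p - 1))"
            using that by (auto intro!: derivative_eq_intros)
          moreover have "p * g * ((p - 1) * u powr (p - 1 - 1)) - (p - 1) * (p * u powr (p - 1))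
                 = (p - 1) * u powr (p - 2) * (p * (g - u))"
          proof -
            have "u powr (p - 2) * u = u powr (p - 2) * u powr 1" using that by simp
            also have "\<dots> = u powr (p - 2 + 1)" by (rule powr_add[symmetric])
            finally have "u powr (p - 1) = u powr (p - 2) * u" by simp
            then show ?thesis by (simp add: algebra_simps)
          qed
          ultimately show ?thesis by simp
        qed
      qed (use p gpos in \<open>auto intro!: continuous_intros mult_nonneg_nonneg\<close>)
      then show ?thesis by simp
    qed
    also have "\<dots> \<le> (\<integral>\<^sup>+u\<in>{0<..<g}. ennreal ((p - 1) * u powr (p - 2)) *
          (\<integral>\<^sup>+s\<in>{x<..}. ennreal (p * h s) * (if u < Gr s then 1 else 0) \<partial>lborel) \<partial>lborel)"
    proof (intro nn_integral_mono)
      fix u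
      show "ennreal ((p - 1) * u powr (p - 2) * (p * (g - u))) * indicator {0<..<g} u \<le>
         ennreal ((p - 1) * u powr (p - 2)) *
          (\<integral>\<^sup>+s\<in>{x<..}. ennreal (p * h s) * (if u < Gr s then 1 else 0) \<partial>lborel) * indicator {0<..<g} u"
      proof (cases "0 < u \<and> u < g")
        case True
        have "ennreal (g - u) \<le> (\<integral>\<^sup>+s\<in>{x<..}. ennreal (h s) * (if u < Gr s then 1 else 0) \<partial>lborel)"
          using inner_bound[OF hm hnn fin, of u] True unfolding Gr_def g_def by simp
        then have "ennreal p * ennreal (g - u) \<le> ennreal p * (\<integral>\<^sup>+s\<in>{x<..}. ennreal (h s) * (if u < Gr s then 1 else 0) \<partial>lborel)"
          by (rule mult_left_mono) simp
        also have "\<dots> = (\<integral>\<^sup>+s\<in>{x<..}. ennreal (p * h s) * (if u < Gr s then 1 else 0) \<partial>lborel)"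
          using p hnn by (subst nn_integral_cmult[symmetric]) (auto simp: ennreal_mult mult_ac)
        finally have "ennreal (p * (g - u)) \<le> \<dots>" using p True by (simp add: ennreal_mult)
        then have "ennreal ((p - 1) * u powr (p - 2)) * ennreal (p * (g - u)) \<le> ennreal ((p - 1) * u powr (p - 2)) * (\<integral>\<^sup>+s\<in>{x<..}. ennreal (p * h s) * (if u < Gr s then 1 else 0) \<partial>lborel)"
          by (rule mult_left_mono) simp
        then show ?thesis using True p by (simp add: ennreal_mult[symmetric])
      qed simp
    qed
    also have "\<dots> = (\<integral>\<^sup>+u. \<integral>\<^sup>+s. ennreal ((p - 1) * u powr (p - 2)) * indicator {0<..<g} u *
           (ennreal (p * h s) * indicator {x<..} s * (if u < Gr s then 1 else 0)) \<partial>lborel \<partial>lborel)"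
    proof (intro nn_integral_cong)
      fix u
      have "(\<integral>\<^sup>+s. (ennreal ((p - 1) * u powr (p - 2)) * indicator {0<..<g} u) *
           (ennreal (p * h s) * indicator {x<..} s * (if u < Gr s then 1 else 0)) \<partial>lborel)
          = (ennreal ((p - 1) * u powr (p - 2)) * indicator {0<..<g} u) *
            (\<integral>\<^sup>+s. ennreal (p * h s) * indicator {x<..} s * (if u < Gr s then 1 else 0) \<partial>lborel)"
        by (rule nn_integral_cmult) measurable
      then show "ennreal ((p - 1) * u powr (p - 2)) *
          (\<integral>\<^sup>+s\<in>{x<..}. ennreal (p * h s) * (if u < Gr s then 1 else 0) \<partial>lborel) * indicator {0<..<g} u
         = (\<integral>\<^sup>+s. ennreal ((p - 1) * u powr (p - 2)) * indicator {0<..<g} u *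
           (ennreal (p * h s) * indicator {x<..} s * (if u < Gr s then 1 else 0)) \<partial>lborel)"
        by (simp add: mult_ac)
    qed
    also have "\<dots> = (\<integral>\<^sup>+s. \<integral>\<^sup>+u. ennreal ((p - 1) * u powr (p - 2)) * indicator {0<..<g} u *
           (ennreal (p * h s) * indicator {x<..} s * (if u < Gr s then 1 else 0)) \<partial>lborel \<partial>lborel)"
      by (rule lborel_pair.Fubini') measurable
    also have "\<dots> = (\<integral>\<^sup>+s. ennreal (p * h s) * indicator {x<..} s *
            (\<integral>\<^sup>+u\<in>{0<..<Gr s}. ennreal ((p - 1) * u powr (p - 2)) \<partial>lborel) \<partial>lborel)"
    proof (intro nn_integral_cong)
      fix s
      show "(\<integral>\<^sup>+u. ennreal ((p - 1) * u powr (p - 2)) * indicator {0<..<g} u *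
           (ennreal (p * h s) * indicator {x<..} s * (if u < Gr s then 1 else 0)) \<partial>lborel)
          = ennreal (p * h s) * indicator {x<..} s *
            (\<integral>\<^sup>+u\<in>{0<..<Gr s}. ennreal ((p - 1) * u powr (p - 2)) \<partial>lborel)"
      proof (cases "x < s")
        case True
        then have "Gr s \<le> g" using Grs by simp
        then have "(\<integral>\<^sup>+u. ennreal ((p - 1) * u powr (p - 2)) * indicator {0<..<g} u *
           (ennreal (p * h s) * indicator {x<..} s * (if u < Gr s then 1 else 0)) \<partial>lborel)
          = (\<integral>\<^sup>+u. ennreal (p * h s) * indicator {x<..} s * (ennreal ((p - 1) * u powr (p - 2)) * indicator {0<..<Gr s} u) \<partial>lborel)"
          by (intro nn_integral_cong) (auto split: split_indicator simp: mult_ac)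
        then show ?thesis by (subst (asm) nn_integral_cmult) auto
      qed simp
    qed
    also have "\<dots> = (\<integral>\<^sup>+s\<in>{x<..}. ennreal (p * Gr s powr (p - 1) * h s) \<partial>lborel)"
    proof (intro nn_integral_cong)
      fix s
      show "ennreal (p * h s) * indicator {x<..} s *
            (\<integral>\<^sup>+u\<in>{0<..<Gr s}. ennreal ((p - 1) * u powr (p - 2)) \<partial>lborel)
           = ennreal (p * Gr s powr (p - 1) * h s) * indicator {x<..} s"
      proof (cases "x < s \<and> Gr s > 0")
        case True
        have "(\<integral>\<^sup>+u\<in>{0<..<Gr s}. ennreal ((p - 1) * u powr (p - 2)) \<partial>lborel) = ennreal (Gr s powr (p - 1))"
          using powr_integral_0[of "p - 1" "Gr s"] True p by simp
        then show ?thesis using True p hnn[of s] by (simp add: ennreal_mult[symmetric] mult_ac)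
      next
        case False
        then consider "\<not> x < s" | "Gr s = 0" using Grs(2)[of s] by force
        then show ?thesis by cases auto
      qed
    qed
    finally show ?thesis unfolding g_def Gr_def .
  qed
qed

lemma powr_integral_inf:
  fixes r v :: real
  assumes "r < 0" "v > 0"
  shows "(\<integral>\<^sup>+u\<in>{v<..}. ennreal (- r * u powr (r - 1)) \<partial>lborel) = ennreal (v powr r)"
proof -
  have "(\<integral>\<^sup>+u\<in>{v<..}. ennreal (- r * u powr (r - 1)) \<partial>lborel) = ennreal (0 - (- (v powr r)))"
  proof (rule nn_FTC_Ioi[where F="\<lambda>u. - (u powr r)"])
    show "((\<lambda>u. - (u powr r)) \<longlongrightarrow> - (v powr r)) (at_right v)"
      using assms by (intro tendsto_intros) auto
    show "((\<lambda>u. - (u powr r)) \<longlongrightarrow> 0) at_top"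
      using tendsto_minus[OF tendsto_neg_powr[OF assms(1) filterlim_ident]] by simp
  qed (use assms in \<open>auto intro!: derivative_eq_intros continuous_intros simp: mult_nonpos_nonneg\<close>)
  then show ?thesis by simp
qed

lemma inner_bound2:
  assumes hm[measurable]: "h \<in> borel_measurable borel" and hnn: "\<And>x. 0 \<le> h x"
  assumes fin: "Gf h x < \<infinity>"
  shows "(\<integral>\<^sup>+s\<in>{x<..}. ennreal (h s) * (if enn2real (Gf h s) < u then 1 else 0) \<partial>lborel) \<le> ennreal u"
    "(\<integral>\<^sup>+s\<in>{x<..}. ennreal (h s) * (if enn2real (Gf h s) < u then 1 else 0) \<partial>lborel) \<le> ennreal (enn2real (Gf h x))"
proof -
  define Gr where "Gr s = enn2real (Gf h s)" for s
  have [measurable]: "Gr \<in> borel_measurable borel" unfolding Gr_def by measurable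
  define T where "T = {s. x < s \<and> Gr s < u}"
  have [measurable]: "T \<in> sets borel" unfolding T_def by measurable
  have eq: "(\<integral>\<^sup>+s\<in>{x<..}. ennreal (h s) * (if Gr s < u then 1 else 0) \<partial>lborel) = (\<integral>\<^sup>+s\<in>T. ennreal (h s) \<partial>lborel)"
    unfolding T_def by (intro nn_integral_cong) (auto split: split_indicator)
  have "(\<integral>\<^sup>+s\<in>T. ennreal (h s) \<partial>lborel) \<le> ennreal u"
  proof (rule Gf_upper_set[OF hm hnn])
    show "bdd_below T" unfolding T_def by (auto intro!: bdd_belowI[of _ x])
    show "s' \<in> T" if "s \<in> T" "s \<le> s'" for s s'
    proof -
      have "Gf h s < \<infinity>" using that fin Gf_antimono[of x s h] unfolding T_def
        by (auto simp: le_less_trans)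
      have "Gr s' \<le> Gr s" unfolding Gr_def using Gf_fin_ge(2)[OF \<open>Gf h s < \<infinity>\<close> \<open>s \<le> s'\<close>] .
      then show ?thesis using that unfolding T_def by auto
    qed
    show "Gf h s \<le> ennreal u" if "s \<in> T" for s
      using that Gf_fin_ge(1)[OF fin, of s] unfolding T_def Gr_def
      by (metis (mono_tags, lifting) ennreal_leI less_imp_le mem_Collect_eq)
  qed measurable
  then show "(\<integral>\<^sup>+s\<in>{x<..}. ennreal (h s) * (if enn2real (Gf h s) < u then 1 else 0) \<partial>lborel) \<le> ennreal u"
    using eq unfolding Gr_def by simp
  have "(\<integral>\<^sup>+s\<in>{x<..}. ennreal (h s) * (if Gr s < u then 1 else 0) \<partial>lborel) \<le> Gf h x"
    unfolding Gf_def by (intro nn_integral_mono) (auto split: split_indicator)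
  then show "(\<integral>\<^sup>+s\<in>{x<..}. ennreal (h s) * (if enn2real (Gf h s) < u then 1 else 0) \<partial>lborel) \<le> ennreal (enn2real (Gf h x))"
    using Gf_fin_ge(1)[OF fin order_refl] unfolding Gr_def by simp
qed

lemma layer_le:
  assumes hm[measurable]: "h \<in> borel_measurable borel" and hnn: "\<And>x. 0 \<le> h x"
  assumes fin: "Gf h x < \<infinity>" and p: "0 < p" "p \<le> 1"
  shows "(\<integral>\<^sup>+s\<in>{x<..}. ennreal (p * enn2real (Gf h s) powr (p - 1) * h s) \<partial>lborel)
         \<le> ennreal (enn2real (Gf h x) powr p)"
proof -
  define Gr where "Gr s = enn2real (Gf h s)" for s
  have [measurable]: "Gr \<in> borel_measurable borel" unfolding Gr_def by measurable
  define g where "g = Gr x"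
  have g0: "0 \<le> g" unfolding g_def Gr_def by simp
  have Grs: "Gr s \<le> g" "0 \<le> Gr s" if "x \<le> s" for s
    using Gf_fin_ge(2)[OF fin that] unfolding Gr_def g_def by auto
  have Gx: "Gf h x = ennreal g" using Gf_fin_ge(1)[OF fin order_refl] unfolding g_def Gr_def .
  show ?thesis
  proof (cases "p = 1")
    case True
    have "(\<integral>\<^sup>+s\<in>{x<..}. ennreal (p * Gr s powr (p - 1) * h s) \<partial>lborel) \<le> Gf h x"
      unfolding Gf_def using True hnn by (intro nn_integral_mono) (auto split: split_indicator intro!: ennreal_leI mult_left_le_one_le)
    then show ?thesis using True Gx g0 unfolding g_def Gr_def by simp
  next
    case False
    then have p1: "p < 1" using p by simp
    show ?thesis
    proof (cases "g = 0")
      case True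
      have "(\<integral>\<^sup>+s\<in>{x<..}. ennreal (p * Gr s powr (p - 1) * h s) \<partial>lborel) = 0"
      proof -
        have z: "\<And>s. x < s \<Longrightarrow> Gr s = 0" using Grs True by (meson antisym less_imp_le)
        show ?thesis by (intro nn_integral_0_iff_AE[THEN iffD2] AE_I2) (auto simp: z split: split_indicator)
      qed
      then show ?thesis unfolding Gr_def by simp
    next
      case False
      then have gpos: "g > 0" using g0 by simp
      have "(\<integral>\<^sup>+s\<in>{x<..}. ennreal (p * Gr s powr (p - 1) * h s) \<partial>lborel)
          \<le> (\<integral>\<^sup>+s. ennreal (p * h s) * indicator {x<..} s *
               (\<integral>\<^sup>+u. ennreal ((1 - p) * u powr (p - 2)) * indicator {0<..} u * (if Gr s < u then 1 else 0) \<partial>lborel) \<partial>lborel)"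
      proof (intro nn_integral_mono)
        fix s
        show "ennreal (p * Gr s powr (p - 1) * h s) * indicator {x<..} s \<le> ennreal (p * h s) * indicator {x<..} s *
               (\<integral>\<^sup>+u. ennreal ((1 - p) * u powr (p - 2)) * indicator {0<..} u * (if Gr s < u then 1 else 0) \<partial>lborel)"
        proof (cases "x < s \<and> Gr s > 0")
          case True
          have "(\<integral>\<^sup>+u. ennreal ((1 - p) * u powr (p - 2)) * indicator {0<..} u * (if Gr s < u then 1 else 0) \<partial>lborel)
              = (\<integral>\<^sup>+u\<in>{Gr s<..}. ennreal (- (p - 1) * u powr (p - 1 - 1)) \<partial>lborel)"
            using True by (intro nn_integral_cong) (auto split: split_indicator simp: diff_diff_eq)
          also have "\<dots> = ennreal (Gr s powr (p - 1))"
            using True p1 by (intro powr_integral_inf) auto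
          finally show ?thesis using True p hnn[of s] by (simp add: ennreal_mult[symmetric] mult_ac)
        next
          case False
          then consider "\<not> x < s" | "Gr s = 0" using Grs(2)[of s] by force
          then show ?thesis by cases auto
        qed
      qed
      also have "\<dots> = (\<integral>\<^sup>+s. \<integral>\<^sup>+u. ennreal ((1 - p) * u powr (p - 2)) * indicator {0<..} u *
             (ennreal (p * h s) * indicator {x<..} s * (if Gr s < u then 1 else 0)) \<partial>lborel \<partial>lborel)"
      proof (intro nn_integral_cong)
        fix s
        have "(\<integral>\<^sup>+u. (ennreal (p * h s) * indicator {x<..} s) * (ennreal ((1 - p) * u powr (p - 2)) * indicator {0<..} u * (if Gr s < u then 1 else 0)) \<partial>lborel)
          = (ennreal (p * h s) * indicator {x<..} s) * (\<integral>\<^sup>+u. ennreal ((1 - p) * u powr (p - 2)) * indicator {0<..} u * (if Gr s < u then 1 else 0) \<partial>lborel)"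
          by (rule nn_integral_cmult) measurable
        then show "ennreal (p * h s) * indicator {x<..} s *
               (\<integral>\<^sup>+u. ennreal ((1 - p) * u powr (p - 2)) * indicator {0<..} u * (if Gr s < u then 1 else 0) \<partial>lborel)
            = (\<integral>\<^sup>+u. ennreal ((1 - p) * u powr (p - 2)) * indicator {0<..} u *
             (ennreal (p * h s) * indicator {x<..} s * (if Gr s < u then 1 else 0)) \<partial>lborel)"
          by (simp add: mult_ac)
      qed
      also have "\<dots> = (\<integral>\<^sup>+u. \<integral>\<^sup>+s. ennreal ((1 - p) * u powr (p - 2)) * indicator {0<..} u *
             (ennreal (p * h s) * indicator {x<..} s * (if Gr s < u then 1 else 0)) \<partial>lborel \<partial>lborel)"
        by (rule lborel_pair.Fubini'[symmetric]) measurable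
      also have "\<dots> = (\<integral>\<^sup>+u. ennreal ((1 - p) * u powr (p - 2)) * indicator {0<..} u *
             (ennreal p * (\<integral>\<^sup>+s\<in>{x<..}. ennreal (h s) * (if Gr s < u then 1 else 0) \<partial>lborel)) \<partial>lborel)"
      proof (intro nn_integral_cong)
        fix u
        have "(\<integral>\<^sup>+s. (ennreal ((1 - p) * u powr (p - 2)) * indicator {0<..} u * ennreal p) * (ennreal (h s) * indicator {x<..} s * (if Gr s < u then 1 else 0)) \<partial>lborel)
          = (ennreal ((1 - p) * u powr (p - 2)) * indicator {0<..} u * ennreal p) * (\<integral>\<^sup>+s. ennreal (h s) * indicator {x<..} s * (if Gr s < u then 1 else 0) \<partial>lborel)"
          by (rule nn_integral_cmult) measurable
        then show "(\<integral>\<^sup>+s. ennreal ((1 - p) * u powr (p - 2)) * indicator {0<..} u *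
             (ennreal (p * h s) * indicator {x<..} s * (if Gr s < u then 1 else 0)) \<partial>lborel)
           = ennreal ((1 - p) * u powr (p - 2)) * indicator {0<..} u *
             (ennreal p * (\<integral>\<^sup>+s\<in>{x<..}. ennreal (h s) * (if Gr s < u then 1 else 0) \<partial>lborel))"
          using p hnn by (simp add: ennreal_mult mult_ac)
      qed
      also have "\<dots> \<le> (\<integral>\<^sup>+u. ennreal (p * (1 - p) * u powr (p - 1)) * indicator {0<..<g} u
                          + ennreal (p * g) * (ennreal ((1 - p) * u powr (p - 2)) * indicator {g<..} u) \<partial>lborel)"
      proof (intro nn_integral_mono_AE, use AE_lborel_singleton[of g] in eventually_elim)
        fix u assume "u \<noteq> g"
        have b1: "(\<integral>\<^sup>+s\<in>{x<..}. ennreal (h s) * (if Gr s < u then 1 else 0) \<partial>lborel) \<le> ennreal u"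
          "(\<integral>\<^sup>+s\<in>{x<..}. ennreal (h s) * (if Gr s < u then 1 else 0) \<partial>lborel) \<le> ennreal g"
          using inner_bound2[OF hm hnn fin, of u] unfolding Gr_def g_def by auto
        show "ennreal ((1 - p) * u powr (p - 2)) * indicator {0<..} u *
             (ennreal p * (\<integral>\<^sup>+s\<in>{x<..}. ennreal (h s) * (if Gr s < u then 1 else 0) \<partial>lborel))
            \<le> ennreal (p * (1 - p) * u powr (p - 1)) * indicator {0<..<g} u
                          + ennreal (p * g) * (ennreal ((1 - p) * u powr (p - 2)) * indicator {g<..} u)"
        proof (cases "0 < u")
          case u0: True
          show ?thesis
          proof (cases "u < g")
            case True
            have "ennreal ((1 - p) * u powr (p - 2)) * (ennreal p * (\<integral>\<^sup>+s\<in>{x<..}. ennreal (h s) * (if Gr s < u then 1 else 0) \<partial>lborel))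
                \<le> ennreal ((1 - p) * u powr (p - 2)) * (ennreal p * ennreal u)"
              by (intro mult_left_mono b1) auto
            also have "\<dots> = ennreal (p * (1 - p) * u powr (p - 1))"
            proof -
              have "u powr (p - 2) * u = u powr (p - 2) * u powr 1" using u0 by simp
              also have "\<dots> = u powr (p - 2 + 1)" by (rule powr_add[symmetric])
              finally have "u powr (p - 2) * u = u powr (p - 1)" by simp
              then show ?thesis using p1 p u0 by (simp add: ennreal_mult[symmetric] mult_ac)
            qed
            finally show ?thesis using u0 True by simp
          next
            case False
            with \<open>u \<noteq> g\<close> have "g < u" by simp
            have "ennreal ((1 - p) * u powr (p - 2)) * (ennreal p * (\<integral>\<^sup>+s\<in>{x<..}. ennreal (h s) * (if Gr s < u then 1 else 0) \<partial>lborel))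
                \<le> ennreal ((1 - p) * u powr (p - 2)) * (ennreal p * ennreal g)"
              by (intro mult_left_mono b1) auto
            then show ?thesis using u0 \<open>g < u\<close> False p g0 by (simp add: ennreal_mult[symmetric] mult_ac)
          qed
        qed simp
      qed
      also have "\<dots> = ennreal ((1 - p) * g powr p) + ennreal (p * g) * ennreal (g powr (p - 1))"
      proof (subst nn_integral_add)
        have "(\<integral>\<^sup>+u. ennreal (p * (1 - p) * u powr (p - 1)) * indicator {0<..<g} u \<partial>lborel)
            = (\<integral>\<^sup>+u. ennreal (1 - p) * (ennreal (p * u powr (p - 1)) * indicator {0<..<g} u) \<partial>lborel)"
        proof (intro nn_integral_cong)
          fix u
          have "ennreal (p * (1 - p) * u powr (p - 1)) = ennreal (1 - p) * ennreal (p * u powr (p - 1))"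
            using p1 p by (subst ennreal_mult[symmetric]) (auto simp: mult_ac)
          then show "ennreal (p * (1 - p) * u powr (p - 1)) * indicator {0<..<g} u
             = ennreal (1 - p) * (ennreal (p * u powr (p - 1)) * indicator {0<..<g} u)" by (simp add: mult_ac)
        qed
        also have "\<dots> = ennreal (1 - p) * (\<integral>\<^sup>+u\<in>{0<..<g}. ennreal (p * u powr (p - 1)) \<partial>lborel)"
          by (rule nn_integral_cmult) measurable
        also have "\<dots> = ennreal ((1 - p) * g powr p)"
          using powr_integral_0[of p g] p p1 gpos by (simp add: ennreal_mult)
        finally have 1: "(\<integral>\<^sup>+u. ennreal (p * (1 - p) * u powr (p - 1)) * indicator {0<..<g} u \<partial>lborel) = ennreal ((1 - p) * g powr p)" .
        have "(\<integral>\<^sup>+u. ennreal (p * g) * (ennreal ((1 - p) * u powr (p - 2)) * indicator {g<..} u) \<partial>lborel)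
           = ennreal (p * g) * (\<integral>\<^sup>+u\<in>{g<..}. ennreal (- (p - 1) * u powr (p - 1 - 1)) \<partial>lborel)"
          by (subst nn_integral_cmult) (auto simp: diff_diff_eq)
        also have "\<dots> = ennreal (p * g) * ennreal (g powr (p - 1))"
          using powr_integral_inf[of "p - 1" g] p1 gpos by simp
        finally show "(\<integral>\<^sup>+u. ennreal (p * (1 - p) * u powr (p - 1)) * indicator {0<..<g} u \<partial>lborel) +
          (\<integral>\<^sup>+u. ennreal (p * g) * (ennreal ((1 - p) * u powr (p - 2)) * indicator {g<..} u) \<partial>lborel) =
          ennreal ((1 - p) * g powr p) + ennreal (p * g) * ennreal (g powr (p - 1))" using 1 by simp
      qed auto
      also have "\<dots> = ennreal (g powr p)"
      proof -
        have "g * g powr (p - 1) = g powr p" using gpos by (simp add: powr_diff)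
        then have "(1 - p) * g powr p + p * g * g powr (p - 1) = g powr p" by (simp add: algebra_simps)
        then show ?thesis using p p1 gpos
          by (simp add: ennreal_mult[symmetric] ennreal_plus[symmetric] del: ennreal_plus)
      qed
      finally show ?thesis unfolding g_def Gr_def .
    qed
  qed
qed

lemma key_ln_identity:
  fixes \<alpha> p Lx x G hx :: real
  assumes "0 < Lx" "0 < x" "0 < \<alpha>" "0 < p" "0 < G" "0 < hx"
  shows "ln (x powr p * Lx powr ((1 + \<alpha>) * p - 1) * hx powr p / x)
       = p * ln (Lx powr (\<alpha> * p) * G powr (p - 1) * hx) + (1 - p) * (ln (Lx powr (\<alpha> * p - 1) / x) + p * ln G)"
proof -
  have L1: "Lx > 0" using assms by simp
  have x0: "x > 0" using assms by simp
  show ?thesis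
    using L1 x0 assms(5,6)
    by (simp add: ln_mult ln_div ln_powr algebra_simps)
qed

lemma arith_gt: "(p::real) > 0 \<Longrightarrow> (p - 1) / p * (a + w + p * g) + 1 / p * ((1 - p) * a + (p * X + (1 - p) * (w + p * g))) = X"
  by (simp add: field_simps)

lemma young_gt:
  fixes \<alpha> p Lx x G hx :: real
  assumes "0 < Lx" "0 < x" "0 < \<alpha>" "1 < p" "0 \<le> G" "0 \<le> hx"
  shows "Lx powr (\<alpha> * p) * G powr (p - 1) * hx \<le>
     (p - 1) / p * (\<alpha> * (Lx powr (\<alpha> * p - 1) / x) * G powr p)
     + 1 / p * (\<alpha> powr (1 - p) * (x powr p * Lx powr ((1 + \<alpha>) * p - 1) * hx powr p / x))"
    (is "?X \<le> (p - 1) / p * ?P + 1 / p * ?Q")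
proof (cases "G = 0 \<or> hx = 0")
  case True
  have "0 \<le> (p - 1) / p * ?P + 1 / p * ?Q" using assms by (auto intro!: add_nonneg_nonneg mult_nonneg_nonneg divide_nonneg_nonneg)
  then show ?thesis using True assms by auto
next
  case False
  then have G: "G > 0" and hx: "hx > 0" using assms by auto
  have L1: "Lx > 0" using assms by simp
  have x0: "x > 0" using assms by simp
  have P: "?P > 0" and Q: "?Q > 0" and X: "?X > 0" using L1 x0 G hx assms by (auto intro!: mult_pos_pos divide_pos_pos)
  have id: "ln (x powr p * Lx powr ((1 + \<alpha>) * p - 1) * hx powr p / x)
       = p * ln ?X + (1 - p) * (ln (Lx powr (\<alpha> * p - 1) / x) + p * ln G)"
    by (rule key_ln_identity) (use assms G hx in auto)
  have lneq: "ln (?P powr ((p - 1) / p) * ?Q powr (1 / p)) = ln ?X"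
  proof -
    have a1: "?P powr ((p - 1) / p) > 0" "?Q powr (1 / p) > 0"
      by (intro powr_gt_zero[THEN iffD2], use P Q in linarith)+
    have "ln (?P powr ((p - 1) / p) * ?Q powr (1 / p)) = (p - 1) / p * ln ?P + 1 / p * ln ?Q"
      unfolding ln_mult_pos[OF a1] ln_powr ..
    also have "ln ?P = ln \<alpha> + ln (Lx powr (\<alpha> * p - 1) / x) + p * ln G"
      using P assms G L1 x0 by (simp add: ln_mult ln_div)
    also have "ln ?Q = (1 - p) * ln \<alpha> + ln (x powr p * Lx powr ((1 + \<alpha>) * p - 1) * hx powr p / x)"
      using Q assms L1 x0 hx by (simp add: ln_mult ln_div)
    also have "(p - 1) / p * (ln \<alpha> + ln (Lx powr (\<alpha> * p - 1) / x) + p * ln G) +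
       1 / p * ((1 - p) * ln \<alpha> + ln (x powr p * Lx powr ((1 + \<alpha>) * p - 1) * hx powr p / x)) = ln ?X"
      unfolding id by (rule arith_gt) (use assms in simp)
    finally show ?thesis .
  qed
  have pos: "?P powr ((p - 1) / p) * ?Q powr (1 / p) > 0"
    by (intro mult_pos_pos powr_gt_zero[THEN iffD2]) (use P Q in linarith)+
  have eq: "?P powr ((p - 1) / p) * ?Q powr (1 / p) = ?X"
    using ln_inj_iff[OF pos X] lneq by blast
  have "?P powr ((p - 1) / p) * ?Q powr (1 / p) \<le> (p - 1) / p * ?P + 1 / p * ?Q"
    using assms P Q by (intro Youngs_inequality_0) (auto simp: field_simps)
  then show ?thesis using eq by simp
qed

lemma young_le:
  fixes \<alpha> p Lx x G hx :: real
  assumes "0 < Lx" "0 < x" "0 < \<alpha>" "0 < p" "p \<le> 1" "0 < G" "0 \<le> hx"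
  shows "x powr p * Lx powr ((1 + \<alpha>) * p - 1) * hx powr p / x \<le>
     p * (\<alpha> powr (p - 1) * (Lx powr (\<alpha> * p) * G powr (p - 1) * hx))
     + (1 - p) * (\<alpha> powr p * (Lx powr (\<alpha> * p - 1) / x) * G powr p)"
    (is "?R \<le> p * ?A + (1 - p) * ?B")
proof (cases "hx = 0")
  case True
  have "0 \<le> p * ?A + (1 - p) * ?B" using assms by (auto intro!: add_nonneg_nonneg mult_nonneg_nonneg divide_nonneg_nonneg)
  then show ?thesis using True assms by auto
next
  case False
  then have hx: "hx > 0" using assms by auto
  have L1: "Lx > 0" using assms by simp
  have x0: "x > 0" using assms by simp
  have A: "?A > 0" and B: "?B > 0" and R: "?R > 0" using L1 x0 assms hx by (auto intro!: mult_pos_pos divide_pos_pos)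
  have id: "ln ?R = p * ln (Lx powr (\<alpha> * p) * G powr (p - 1) * hx) + (1 - p) * (ln (Lx powr (\<alpha> * p - 1) / x) + p * ln G)"
    by (rule key_ln_identity) (use assms hx in auto)
  have lneq: "ln (?A powr p * ?B powr (1 - p)) = ln ?R"
  proof -
    have a1: "?A powr p > 0" "?B powr (1 - p) > 0"
      by (intro powr_gt_zero[THEN iffD2], use A B in linarith)+
    have "ln (?A powr p * ?B powr (1 - p)) = p * ln ?A + (1 - p) * ln ?B"
      unfolding ln_mult_pos[OF a1] ln_powr ..
    also have "ln ?A = (p - 1) * ln \<alpha> + ln (Lx powr (\<alpha> * p) * G powr (p - 1) * hx)"
      using A assms L1 x0 hx by (simp add: ln_mult ln_div)
    also have "ln ?B = p * ln \<alpha> + ln (Lx powr (\<alpha> * p - 1) / x) + p * ln G"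
      using B assms L1 x0 by (simp add: ln_mult ln_div)
    finally show ?thesis using id by (simp add: algebra_simps)
  qed
  have pos: "?A powr p * ?B powr (1 - p) > 0"
    by (intro mult_pos_pos powr_gt_zero[THEN iffD2]) (use A B in linarith)+
  have eq: "?A powr p * ?B powr (1 - p) = ?R"
    using ln_inj_iff[OF pos R] lneq by blast
  have "?A powr p * ?B powr (1 - p) \<le> p * ?A + (1 - p) * ?B"
    using assms A B by (intro Youngs_inequality_0) auto
  then show ?thesis using eq by simp
qed

lemma L_gt1: fixes l x :: real assumes "0 < l" "l < x" shows "ln (x * exp 1 / l) > 1"
proof -
  have "exp 1 * l < exp 1 * x" using assms by (intro mult_strict_left_mono) auto
  then have "x * exp 1 / l > exp 1" using assms by (simp add: field_simps)
  then have "ln (x * exp 1 / l) > ln (exp 1)" using assms by (subst ln_less_cancel_iff) auto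
  then show ?thesis by simp
qed

lemma DERIV_L: fixes l x :: real assumes "0 < l" "0 < x" shows "DERIV (\<lambda>x. ln (x * exp 1 / l)) x :> 1 / x"
proof -
  have pos: "0 < x * exp 1 / l" using assms by simp
  have d: "DERIV (\<lambda>x. x * exp 1 / l) x :> exp 1 / l"
    using assms by (auto intro!: derivative_eq_intros)
  have "DERIV (\<lambda>x. ln (x * exp 1 / l)) x :> inverse (x * exp 1 / l) * (exp 1 / l)"
    by (rule DERIV_chain2[OF DERIV_ln[OF pos] d])
  then show ?thesis using assms by simp
qed

lemma weight_FTC:
  fixes l y \<alpha> p :: real
  assumes "0 < l" "l < y" "0 < \<alpha>" "0 < p"
  shows "(\<integral>\<^sup>+x\<in>{l<..<y}. ennreal (p * \<alpha> * (ln (x * exp 1 / l) powr (\<alpha> * p - 1) / x)) \<partial>lborel)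
       = ennreal (ln (y * exp 1 / l) powr (\<alpha> * p) - 1)"
proof -
  have "(\<integral>\<^sup>+x\<in>{l<..<y}. ennreal (p * \<alpha> * (ln (x * exp 1 / l) powr (\<alpha> * p - 1) / x)) \<partial>lborel)
       = ennreal (ln (y * exp 1 / l) powr (\<alpha> * p) - 1 powr (\<alpha> * p))"
  proof (rule nn_FTC_Ioo[where F="\<lambda>x. ln (x * exp 1 / l) powr (\<alpha> * p)"])
    show "DERIV (\<lambda>x. ln (x * exp 1 / l) powr (\<alpha> * p)) x :> p * \<alpha> * (ln (x * exp 1 / l) powr (\<alpha> * p - 1) / x)"
      if "l < x" "x < y" for x
    proof -
      have "DERIV (\<lambda>x. ln (x * exp 1 / l) powr (\<alpha> * p)) x :> (\<alpha> * p) * ln (x * exp 1 / l) powr (\<alpha> * p - of_nat 1) * (1 / x)"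
      proof -
        have Lp: "0 < ln (x * exp 1 / l)" using L_gt1[of l x] that assms by linarith
        have x0: "0 < x" using that assms by linarith
        show ?thesis by (rule DERIV_fun_powr[OF DERIV_L[OF assms(1) x0] Lp])
      qed
      then show ?thesis by (simp add: field_simps)
    qed
    show "((\<lambda>x. ln (x * exp 1 / l) powr (\<alpha> * p)) \<longlongrightarrow> 1 powr (\<alpha> * p)) (at_right l)"
    proof -
      have "((\<lambda>x. ln (x * exp 1 / l) powr (\<alpha> * p)) \<longlongrightarrow> ln (l * exp 1 / l) powr (\<alpha> * p)) (at_right l)"
        using assms by (intro tendsto_intros) auto
      then show ?thesis using assms by simp
    qed
    show "((\<lambda>x. ln (x * exp 1 / l) powr (\<alpha> * p)) \<longlongrightarrow> ln (y * exp 1 / l) powr (\<alpha> * p)) (at_left y)"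
      using assms L_gt1[of l y] by (intro tendsto_intros) (auto intro!: mult_pos_pos)
    show "isCont (\<lambda>x. p * \<alpha> * (ln (x * exp 1 / l) powr (\<alpha> * p - 1) / x)) x" if "l < x" "x < y" for x
      using that assms L_gt1[of l x] by (intro continuous_intros) (auto intro!: mult_pos_pos)
    show "0 \<le> p * \<alpha> * (ln (x * exp 1 / l) powr (\<alpha> * p - 1) / x)" if "l < x" "x < y" for x
      using that assms by auto
  qed (use assms in auto)
  then show ?thesis by simp
qed

lemma tonelli_weight:
  fixes \<Phi> :: "real \<Rightarrow> ennreal" and l \<alpha> p :: real
  assumes [measurable]: "\<Phi> \<in> borel_measurable borel"
  assumes "0 < l" "0 < \<alpha>" "0 < p"
  shows "(\<integral>\<^sup>+x\<in>{l<..}. ennreal (p * \<alpha> * (ln (x * exp 1 / l) powr (\<alpha> * p - 1) / x)) * (\<integral>\<^sup>+s\<in>{x<..}. \<Phi> s \<partial>lborel) \<partial>lborel)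
       = (\<integral>\<^sup>+s\<in>{l<..}. \<Phi> s * ennreal (ln (s * exp 1 / l) powr (\<alpha> * p) - 1) \<partial>lborel)"
proof -
  have "(\<integral>\<^sup>+x\<in>{l<..}. ennreal (p * \<alpha> * (ln (x * exp 1 / l) powr (\<alpha> * p - 1) / x)) * (\<integral>\<^sup>+s\<in>{x<..}. \<Phi> s \<partial>lborel) \<partial>lborel)
       = (\<integral>\<^sup>+s\<in>{l<..}. \<Phi> s * (\<integral>\<^sup>+x\<in>{l<..<s}. ennreal (p * \<alpha> * (ln (x * exp 1 / l) powr (\<alpha> * p - 1) / x)) \<partial>lborel) \<partial>lborel)"
    by (rule tonelli_tail) measurable
  also have "\<dots> = (\<integral>\<^sup>+s\<in>{l<..}. \<Phi> s * ennreal (ln (s * exp 1 / l) powr (\<alpha> * p) - 1) \<partial>lborel)"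
  proof (intro nn_integral_cong)
    fix s
    show "\<Phi> s * (\<integral>\<^sup>+x\<in>{l<..<s}. ennreal (p * \<alpha> * (ln (x * exp 1 / l) powr (\<alpha> * p - 1) / x)) \<partial>lborel) * indicator {l<..} s
        = \<Phi> s * ennreal (ln (s * exp 1 / l) powr (\<alpha> * p) - 1) * indicator {l<..} s"
    proof (cases "l < s")
      case True
      then show ?thesis using weight_FTC[of l s \<alpha> p] assms by simp
    qed simp
  qed
  finally show ?thesis .
qed

definition Jf :: "real \<Rightarrow> real \<Rightarrow> real \<Rightarrow> (real \<Rightarrow> real) \<Rightarrow> ennreal" where
  "Jf \<alpha> p l h = (\<integral>\<^sup>+x\<in>{l<..}. ennreal (ln (x * exp 1 / l) powr (\<alpha> * p - 1) / x) * epowr (Gf h x) p \<partial>lborel)"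

definition Rf :: "real \<Rightarrow> real \<Rightarrow> real \<Rightarrow> (real \<Rightarrow> real) \<Rightarrow> ennreal" where
  "Rf \<alpha> p l h = (\<integral>\<^sup>+x\<in>{l<..}. ennreal (x powr p * ln (x * exp 1 / l) powr ((1 + \<alpha>) * p - 1) * h x powr p / x) \<partial>lborel)"

lemma epowr_ennreal: "0 \<le> a \<Longrightarrow> epowr (ennreal a) p = ennreal (a powr p)"
  by (simp add: epowr_def)

lemma nn_integral_lin2:
  fixes f1 f2 :: "'a \<Rightarrow> ennreal"
  assumes [measurable]: "f1 \<in> borel_measurable M" "f2 \<in> borel_measurable M" "S \<in> sets M"
  shows "(\<integral>\<^sup>+x\<in>S. c1 * f1 x + c2 * f2 x \<partial>M) = c1 * (\<integral>\<^sup>+x\<in>S. f1 x \<partial>M) + c2 * (\<integral>\<^sup>+x\<in>S. f2 x \<partial>M)"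
proof -
  have "(\<integral>\<^sup>+x\<in>S. c1 * f1 x + c2 * f2 x \<partial>M) = (\<integral>\<^sup>+x. c1 * (f1 x * indicator S x) + c2 * (f2 x * indicator S x) \<partial>M)"
    by (intro nn_integral_cong) (auto split: split_indicator)
  also have "\<dots> = (\<integral>\<^sup>+x. c1 * (f1 x * indicator S x) \<partial>M) + (\<integral>\<^sup>+x. c2 * (f2 x * indicator S x) \<partial>M)"
    by (rule nn_integral_add) measurable
  also have "\<dots> = c1 * (\<integral>\<^sup>+x\<in>S. f1 x \<partial>M) + c2 * (\<integral>\<^sup>+x\<in>S. f2 x \<partial>M)"
    by (simp add: nn_integral_cmult)
  finally show ?thesis .
qed

lemma mainA:
  fixes \<alpha> p l :: real
  assumes hm[measurable]: "h \<in> borel_measurable borel" and hnn: "\<And>x. 0 \<le> h x"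
  assumes a: "0 < \<alpha>" and p: "1 < p" and l: "0 < l"
  assumes fin: "Gf h l < \<infinity>" and Jfin: "Jf \<alpha> p l h < \<infinity>"
  shows "ennreal (\<alpha> powr (p - 1)) * epowr (Gf h l) p + ennreal (\<alpha> powr p) * Jf \<alpha> p l h \<le> Rf \<alpha> p l h"
proof -
  define Gr where "Gr s = enn2real (Gf h s)" for s
  have [measurable]: "Gr \<in> borel_measurable borel" unfolding Gr_def by measurable
  define L where "L x = ln (x * exp 1 / l)" for x
  have [measurable]: "L \<in> borel_measurable borel" unfolding L_def by measurable
  have Lgt: "L x > 1" if "l < x" for x using L_gt1[OF l that] unfolding L_def .
  have Gs: "Gf h s = ennreal (Gr s)" "0 \<le> Gr s" if "l \<le> s" for s
    using Gf_fin_ge(1)[OF fin that] unfolding Gr_def by auto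
  define \<Phi> where "\<Phi> s = ennreal (p * Gr s powr (p - 1) * h s)" for s
  have [measurable]: "\<Phi> \<in> borel_measurable borel" unfolding \<Phi>_def by measurable
  define A where "A = (\<integral>\<^sup>+x\<in>{l<..}. ennreal (L x powr (\<alpha> * p) * Gr x powr (p - 1) * h x) \<partial>lborel)"
  define J where "J = Jf \<alpha> p l h"
  define R where "R = Rf \<alpha> p l h"
  have Jeq: "J = (\<integral>\<^sup>+x\<in>{l<..}. ennreal (L x powr (\<alpha> * p - 1) / x * Gr x powr p) \<partial>lborel)"
    unfolding J_def Jf_def L_def
  proof (intro nn_integral_cong)
    fix x
    show "ennreal (ln (x * exp 1 / l) powr (\<alpha> * p - 1) / x) * epowr (Gf h x) p * indicator {l<..} x =
         ennreal (ln (x * exp 1 / l) powr (\<alpha> * p - 1) / x * Gr x powr p) * indicator {l<..} x"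
    proof (cases "l < x")
      case True
      then have "0 < x" using l by simp
      then show ?thesis using True Gs[of x] by (simp add: epowr_ennreal, subst ennreal_mult[symmetric]) auto
    qed simp
  qed
  have Req: "R = (\<integral>\<^sup>+x\<in>{l<..}. ennreal (x powr p * L x powr ((1 + \<alpha>) * p - 1) * h x powr p / x) \<partial>lborel)"
    unfolding R_def Rf_def L_def ..
  have Y: "A \<le> ennreal ((p - 1) / p * \<alpha>) * J + ennreal (\<alpha> powr (1 - p) / p) * R"
  proof -
    have "A \<le> (\<integral>\<^sup>+x\<in>{l<..}. ennreal ((p - 1) / p * \<alpha>) * ennreal (L x powr (\<alpha> * p - 1) / x * Gr x powr p)
               + ennreal (\<alpha> powr (1 - p) / p) * ennreal (x powr p * L x powr ((1 + \<alpha>) * p - 1) * h x powr p / x) \<partial>lborel)"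
      unfolding A_def
    proof (intro nn_integral_mono)
      fix x
      show "ennreal (L x powr (\<alpha> * p) * Gr x powr (p - 1) * h x) * indicator {l<..} x \<le>
          (ennreal ((p - 1) / p * \<alpha>) * ennreal (L x powr (\<alpha> * p - 1) / x * Gr x powr p)
               + ennreal (\<alpha> powr (1 - p) / p) * ennreal (x powr p * L x powr ((1 + \<alpha>) * p - 1) * h x powr p / x)) * indicator {l<..} x"
      proof (cases "l < x")
        case True
        have "L x powr (\<alpha> * p) * Gr x powr (p - 1) * h x \<le>
          (p - 1) / p * (\<alpha> * (L x powr (\<alpha> * p - 1) / x) * Gr x powr p)
          + 1 / p * (\<alpha> powr (1 - p) * (x powr p * L x powr ((1 + \<alpha>) * p - 1) * h x powr p / x))"
          using Lgt[OF True] True l a p Gs(2)[of x] hnn[of x] by (intro young_gt) auto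
        then have "ennreal (L x powr (\<alpha> * p) * Gr x powr (p - 1) * h x) \<le>
          ennreal ((p - 1) / p * \<alpha> * (L x powr (\<alpha> * p - 1) / x * Gr x powr p)
          + \<alpha> powr (1 - p) / p * (x powr p * L x powr ((1 + \<alpha>) * p - 1) * h x powr p / x))"
          by (intro ennreal_leI) (simp add: algebra_simps)
        also have "\<dots> = ennreal ((p - 1) / p * \<alpha>) * ennreal (L x powr (\<alpha> * p - 1) / x * Gr x powr p)
               + ennreal (\<alpha> powr (1 - p) / p) * ennreal (x powr p * L x powr ((1 + \<alpha>) * p - 1) * h x powr p / x)"
        proof -
          have x0: "0 < x" using True l by simp
          have nn: "0 \<le> (p - 1) / p * \<alpha>" "0 \<le> L x powr (\<alpha> * p - 1) / x * Gr x powr p"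
             "0 \<le> \<alpha> powr (1 - p) / p" "0 \<le> x powr p * L x powr ((1 + \<alpha>) * p - 1) * h x powr p / x"
            using p a x0 by auto
          show ?thesis
            unfolding ennreal_plus[OF mult_nonneg_nonneg[OF nn(1,2)] mult_nonneg_nonneg[OF nn(3,4)]]
              ennreal_mult[OF nn(1,2)] ennreal_mult[OF nn(3,4)] ..
        qed
        finally show ?thesis using True by simp
      qed simp
    qed
    also have "\<dots> = ennreal ((p - 1) / p * \<alpha>) * J + ennreal (\<alpha> powr (1 - p) / p) * R"
      unfolding Jeq Req by (rule nn_integral_lin2) measurable
    finally show ?thesis .
  qed
  have Lay: "ennreal (Gr x powr p) \<le> (\<integral>\<^sup>+s\<in>{x<..}. \<Phi> s \<partial>lborel)" if "l \<le> x" for x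
  proof -
    have "Gf h x < \<infinity>" using Gf_antimono[OF that, of h] fin by (simp add: le_less_trans)
    from layer_ge[OF hm hnn this p] show ?thesis unfolding \<Phi>_def Gr_def .
  qed
  have T: "(\<integral>\<^sup>+x\<in>{l<..}. ennreal (p * \<alpha> * (L x powr (\<alpha> * p - 1) / x)) * (\<integral>\<^sup>+s\<in>{x<..}. \<Phi> s \<partial>lborel) \<partial>lborel)
       = (\<integral>\<^sup>+s\<in>{l<..}. \<Phi> s * ennreal (L s powr (\<alpha> * p) - 1) \<partial>lborel)"
    unfolding L_def by (rule tonelli_weight) (use l a p in auto)
  have K1: "ennreal (p * \<alpha>) * J \<le> (\<integral>\<^sup>+s\<in>{l<..}. \<Phi> s * ennreal (L s powr (\<alpha> * p) - 1) \<partial>lborel)"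
  proof -
    have "ennreal (p * \<alpha>) * J = (\<integral>\<^sup>+x\<in>{l<..}. ennreal (p * \<alpha> * (L x powr (\<alpha> * p - 1) / x)) * ennreal (Gr x powr p) \<partial>lborel)"
      unfolding Jeq
    proof (subst nn_integral_cmult[symmetric], measurable, intro nn_integral_cong)
      fix x
      show "ennreal (p * \<alpha>) * (ennreal (L x powr (\<alpha> * p - 1) / x * Gr x powr p) * indicator {l<..} x) =
            ennreal (p * \<alpha> * (L x powr (\<alpha> * p - 1) / x)) * ennreal (Gr x powr p) * indicator {l<..} x"
      proof (cases "l < x")
        case True
        then have "0 < x" using l by simp
        have nn: "0 \<le> p * \<alpha>" "0 \<le> L x powr (\<alpha> * p - 1) / x * Gr x powr p"
          "0 \<le> p * \<alpha> * (L x powr (\<alpha> * p - 1) / x)" "0 \<le> Gr x powr p"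
          using p a \<open>0 < x\<close> by auto
        have 1: "ennreal (p * \<alpha> * (L x powr (\<alpha> * p - 1) / x * Gr x powr p)) = ennreal (p * \<alpha>) * ennreal (L x powr (\<alpha> * p - 1) / x * Gr x powr p)"
          by (rule ennreal_mult[OF nn(1,2)])
        have 2: "ennreal (p * \<alpha> * (L x powr (\<alpha> * p - 1) / x) * Gr x powr p) = ennreal (p * \<alpha> * (L x powr (\<alpha> * p - 1) / x)) * ennreal (Gr x powr p)"
          by (rule ennreal_mult[OF nn(3,4)])
        have 3: "p * \<alpha> * (L x powr (\<alpha> * p - 1) / x * Gr x powr p) = p * \<alpha> * (L x powr (\<alpha> * p - 1) / x) * Gr x powr p"
          by (simp add: mult_ac)
        have i: "indicator {l<..} x = (1::ennreal)" using True by simp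
        show ?thesis unfolding i mult_1_right 1[symmetric] 2[symmetric] 3 ..
      qed simp
    qed
    also have "\<dots> \<le> (\<integral>\<^sup>+x\<in>{l<..}. ennreal (p * \<alpha> * (L x powr (\<alpha> * p - 1) / x)) * (\<integral>\<^sup>+s\<in>{x<..}. \<Phi> s \<partial>lborel) \<partial>lborel)"
      by (intro nn_integral_mono) (auto split: split_indicator intro!: mult_left_mono Lay)
    finally show ?thesis unfolding T .
  qed
  have K: "ennreal (Gr l powr p) + ennreal (p * \<alpha>) * J \<le> ennreal p * A"
  proof -
    have "ennreal (Gr l powr p) + ennreal (p * \<alpha>) * J \<le> (\<integral>\<^sup>+s\<in>{l<..}. \<Phi> s \<partial>lborel) + (\<integral>\<^sup>+s\<in>{l<..}. \<Phi> s * ennreal (L s powr (\<alpha> * p) - 1) \<partial>lborel)"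
      by (intro add_mono Lay K1) simp
    also have "\<dots> = (\<integral>\<^sup>+s\<in>{l<..}. \<Phi> s + \<Phi> s * ennreal (L s powr (\<alpha> * p) - 1) \<partial>lborel)"
      by (subst nn_integral_add[symmetric]) (auto intro!: nn_integral_cong simp: distrib_right)
    also have "\<dots> = ennreal p * A"
      unfolding A_def
    proof (subst nn_integral_cmult[symmetric], measurable, intro nn_integral_cong)
      fix s
      show "(\<Phi> s + \<Phi> s * ennreal (L s powr (\<alpha> * p) - 1)) * indicator {l<..} s =
         ennreal p * (ennreal (L s powr (\<alpha> * p) * Gr s powr (p - 1) * h s) * indicator {l<..} s)"
      proof (cases "l < s")
        case True
        have L1: "1 \<le> L s powr (\<alpha> * p)" using Lgt[OF True] a p by (intro ge_one_powr_ge_zero) auto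
        have "\<Phi> s + \<Phi> s * ennreal (L s powr (\<alpha> * p) - 1) = \<Phi> s * (1 + ennreal (L s powr (\<alpha> * p) - 1))"
          by (simp add: distrib_left)
        also have "1 + ennreal (L s powr (\<alpha> * p) - 1) = ennreal (L s powr (\<alpha> * p))"
          using ennreal_plus[of 1 "L s powr (\<alpha> * p) - 1"] L1 by simp
        finally show ?thesis using True p hnn[of s] unfolding \<Phi>_def
          by (simp add: ennreal_mult[symmetric] mult_ac)
      qed simp
    qed
    finally show ?thesis .
  qed
  show ?thesis
  proof (cases "R = \<infinity>")
    case True then show ?thesis unfolding R_def by simp
  next
    case False
    then obtain r where r: "R = ennreal r" "0 \<le> r" by (cases R) auto
    obtain j where j: "J = ennreal j" "0 \<le> j" using Jfin unfolding J_def by (cases "Jf \<alpha> p l h") auto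
    have "ennreal ((p - 1) / p * \<alpha>) * J + ennreal (\<alpha> powr (1 - p) / p) * R < top"
      unfolding r j by (simp add: ennreal_mult_less_top)
    then have Afin: "A < \<infinity>" using Y by (simp add: le_less_trans)
    then obtain a0 where A0: "A = ennreal a0" "0 \<le> a0" by (cases A) auto
    define g where "g = Gr l"
    have g0: "0 \<le> g" unfolding g_def using Gs[of l] by simp
    have Kr: "g powr p + p * \<alpha> * j \<le> p * a0"
      using K unfolding A0 j g_def using p a j(2) A0(2) Gs(2)[of l]
      by (simp add: ennreal_mult[symmetric] ennreal_plus[symmetric] del: ennreal_plus)
    have Yr: "a0 \<le> (p - 1) / p * \<alpha> * j + \<alpha> powr (1 - p) / p * r"
      using Y unfolding A0 j r using p a j(2) r(2)
      by (simp add: ennreal_mult[symmetric] ennreal_plus[symmetric] del: ennreal_plus)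
    have "g powr p + \<alpha> * j \<le> \<alpha> powr (1 - p) * r"
    proof -
      have "p * a0 \<le> p * ((p - 1) / p * \<alpha> * j + \<alpha> powr (1 - p) / p * r)"
        using mult_left_mono[OF Yr, of p] p by simp
      also have "\<dots> = (p - 1) * \<alpha> * j + \<alpha> powr (1 - p) * r" using p by (simp add: field_simps)
      finally have "p * a0 \<le> (p - 1) * \<alpha> * j + \<alpha> powr (1 - p) * r" .
      then show ?thesis using Kr by (simp add: algebra_simps)
    qed
    then have "\<alpha> powr (p - 1) * (g powr p + \<alpha> * j) \<le> \<alpha> powr (p - 1) * (\<alpha> powr (1 - p) * r)"
      by (rule mult_left_mono) simp
    moreover have "\<alpha> powr (p - 1) * (\<alpha> powr (1 - p) * r) = r"
    proof -
      have e1: "\<alpha> powr (p - 1) * \<alpha> powr (1 - p) = 1" using a by (simp add: powr_add[symmetric])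
      show ?thesis by (simp add: mult.assoc[symmetric] e1)
    qed
    moreover have "\<alpha> powr (p - 1) * (g powr p + \<alpha> * j) = \<alpha> powr (p - 1) * g powr p + \<alpha> powr p * j"
    proof -
      have e2: "\<alpha> powr (p - 1) * \<alpha> = \<alpha> powr p" using a by (simp add: powr_diff)
      show ?thesis by (simp add: distrib_left e2[symmetric] mult.assoc)
    qed
    ultimately have fin_ineq: "\<alpha> powr (p - 1) * g powr p + \<alpha> powr p * j \<le> r"
      by simp
    have "ennreal (\<alpha> powr (p - 1)) * epowr (Gf h l) p + ennreal (\<alpha> powr p) * Jf \<alpha> p l h
        = ennreal (\<alpha> powr (p - 1) * g powr p + \<alpha> powr p * j)"
      using Gs[of l] j g0 unfolding J_def[symmetric] g_def
      by (simp add: epowr_ennreal ennreal_mult[symmetric] ennreal_plus[symmetric] del: ennreal_plus)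
    also have "\<dots> \<le> R" unfolding r using fin_ineq by (intro ennreal_leI)
    finally show ?thesis unfolding R_def .
  qed
qed

lemma mainB:
  fixes \<alpha> p l :: real
  assumes hm[measurable]: "h \<in> borel_measurable borel" and hnn: "\<And>x. 0 \<le> h x"
  assumes a: "0 < \<alpha>" and p: "0 < p" "p \<le> 1" and l: "0 < l"
  shows "Rf \<alpha> p l h \<le> ennreal (\<alpha> powr (p - 1)) * epowr (Gf h l) p + ennreal (\<alpha> powr p) * Jf \<alpha> p l h"
proof (cases "Gf h l = \<infinity> \<or> Jf \<alpha> p l h = \<infinity>")
  case True
  then show ?thesis using a by (auto simp: epowr_def ennreal_mult_top)
next
  case False
  then have fin: "Gf h l < \<infinity>" and Jfin: "Jf \<alpha> p l h < \<infinity>" by (auto simp: top.not_eq_extremum)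
  define Gr where "Gr s = enn2real (Gf h s)" for s
  have [measurable]: "Gr \<in> borel_measurable borel" unfolding Gr_def by measurable
  define L where "L x = ln (x * exp 1 / l)" for x
  have [measurable]: "L \<in> borel_measurable borel" unfolding L_def by measurable
  have Lgt: "L x > 1" if "l < x" for x using L_gt1[OF l that] unfolding L_def .
  have Gs: "Gf h s = ennreal (Gr s)" "0 \<le> Gr s" if "l \<le> s" for s
    using Gf_fin_ge(1)[OF fin that] unfolding Gr_def by auto
  define \<Phi> where "\<Phi> s = ennreal (p * Gr s powr (p - 1) * h s)" for s
  have [measurable]: "\<Phi> \<in> borel_measurable borel" unfolding \<Phi>_def by measurable
  define A where "A = (\<integral>\<^sup>+x\<in>{l<..}. ennreal (L x powr (\<alpha> * p) * Gr x powr (p - 1) * h x) \<partial>lborel)"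
  define J where "J = Jf \<alpha> p l h"
  define R where "R = Rf \<alpha> p l h"
  have Jeq: "J = (\<integral>\<^sup>+x\<in>{l<..}. ennreal (L x powr (\<alpha> * p - 1) / x * Gr x powr p) \<partial>lborel)"
    unfolding J_def Jf_def L_def
  proof (intro nn_integral_cong)
    fix x
    show "ennreal (ln (x * exp 1 / l) powr (\<alpha> * p - 1) / x) * epowr (Gf h x) p * indicator {l<..} x =
         ennreal (ln (x * exp 1 / l) powr (\<alpha> * p - 1) / x * Gr x powr p) * indicator {l<..} x"
    proof (cases "l < x")
      case True
      then have "0 < x" using l by simp
      then show ?thesis using True Gs[of x] by (simp add: epowr_ennreal, subst ennreal_mult[symmetric]) auto
    qed simp
  qed
  have Req: "R = (\<integral>\<^sup>+x\<in>{l<..}. ennreal (x powr p * L x powr ((1 + \<alpha>) * p - 1) * h x powr p / x) \<partial>lborel)"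
    unfolding R_def Rf_def L_def ..
  have AEz: "AE x in lborel. l < x \<longrightarrow> Gr x = 0 \<longrightarrow> h x = 0"
  proof -
    define T where "T = {x. l < x \<and> Gr x = 0}"
    have [measurable]: "T \<in> sets borel" unfolding T_def by measurable
    have "(\<integral>\<^sup>+y\<in>T. ennreal (h y) \<partial>lborel) \<le> ennreal 0"
    proof (rule Gf_upper_set[OF hm hnn])
      show "bdd_below T" unfolding T_def by (auto intro!: bdd_belowI[of _ l])
      show "s' \<in> T" if "s \<in> T" "s \<le> s'" for s s'
      proof -
        have "Gf h s' \<le> Gf h s" using that(2) by (rule Gf_antimono)
        then have "Gf h s' = 0" using that Gs[of s] unfolding T_def by auto
        then show ?thesis using that unfolding T_def Gr_def by auto
      qed
      show "Gf h s \<le> ennreal 0" if "s \<in> T" for s using that Gs[of s] unfolding T_def by auto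
    qed measurable
    then have "(\<integral>\<^sup>+y. ennreal (h y) * indicator T y \<partial>lborel) = 0" by simp
    then have "AE y in lborel. ennreal (h y) * indicator T y = 0"
      by (subst (asm) nn_integral_0_iff_AE) auto
    then show ?thesis
      by eventually_elim (use hnn in \<open>auto simp: T_def split: split_indicator\<close>)
  qed
  have Y: "R \<le> ennreal (p * \<alpha> powr (p - 1)) * A + ennreal ((1 - p) * \<alpha> powr p) * J"
  proof -
    have "R \<le> (\<integral>\<^sup>+x\<in>{l<..}. ennreal (p * \<alpha> powr (p - 1)) * ennreal (L x powr (\<alpha> * p) * Gr x powr (p - 1) * h x)
               + ennreal ((1 - p) * \<alpha> powr p) * ennreal (L x powr (\<alpha> * p - 1) / x * Gr x powr p) \<partial>lborel)"
      unfolding Req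
    proof (intro nn_integral_mono_AE, use AEz in eventually_elim)
      fix x assume z: "l < x \<longrightarrow> Gr x = 0 \<longrightarrow> h x = 0"
      show "ennreal (x powr p * L x powr ((1 + \<alpha>) * p - 1) * h x powr p / x) * indicator {l<..} x \<le>
          (ennreal (p * \<alpha> powr (p - 1)) * ennreal (L x powr (\<alpha> * p) * Gr x powr (p - 1) * h x)
               + ennreal ((1 - p) * \<alpha> powr p) * ennreal (L x powr (\<alpha> * p - 1) / x * Gr x powr p)) * indicator {l<..} x"
      proof (cases "l < x")
        case True
        have x0: "0 < x" using True l by simp
        have nn: "0 \<le> p * \<alpha> powr (p - 1)" "0 \<le> L x powr (\<alpha> * p) * Gr x powr (p - 1) * h x"
             "0 \<le> (1 - p) * \<alpha> powr p" "0 \<le> L x powr (\<alpha> * p - 1) / x * Gr x powr p"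
          using p a x0 hnn[of x] by auto
        have "x powr p * L x powr ((1 + \<alpha>) * p - 1) * h x powr p / x \<le>
           p * (\<alpha> powr (p - 1) * (L x powr (\<alpha> * p) * Gr x powr (p - 1) * h x))
           + (1 - p) * (\<alpha> powr p * (L x powr (\<alpha> * p - 1) / x) * Gr x powr p)"
        proof (cases "Gr x = 0")
          case True
          with z \<open>l < x\<close> have "h x = 0" by simp
          then show ?thesis using p True by simp
        next
          case False
          then have "0 < Gr x" using Gs(2)[of x] True by simp
          then show ?thesis using Lgt[OF True] x0 a p hnn[of x] by (intro young_le) auto
        qed
        then have "ennreal (x powr p * L x powr ((1 + \<alpha>) * p - 1) * h x powr p / x) \<le>
           ennreal (p * \<alpha> powr (p - 1) * (L x powr (\<alpha> * p) * Gr x powr (p - 1) * h x)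
           + (1 - p) * \<alpha> powr p * (L x powr (\<alpha> * p - 1) / x * Gr x powr p))"
          by (intro ennreal_leI) (simp add: algebra_simps)
        also have "\<dots> = ennreal (p * \<alpha> powr (p - 1)) * ennreal (L x powr (\<alpha> * p) * Gr x powr (p - 1) * h x)
               + ennreal ((1 - p) * \<alpha> powr p) * ennreal (L x powr (\<alpha> * p - 1) / x * Gr x powr p)"
          unfolding ennreal_plus[OF mult_nonneg_nonneg[OF nn(1,2)] mult_nonneg_nonneg[OF nn(3,4)]]
              ennreal_mult[OF nn(1,2)] ennreal_mult[OF nn(3,4)] ..
        finally show ?thesis using True by simp
      qed simp
    qed
    also have "\<dots> = ennreal (p * \<alpha> powr (p - 1)) * A + ennreal ((1 - p) * \<alpha> powr p) * J"
      unfolding Jeq A_def by (rule nn_integral_lin2) measurable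
    finally show ?thesis .
  qed
  have Lay: "(\<integral>\<^sup>+s\<in>{x<..}. \<Phi> s \<partial>lborel) \<le> ennreal (Gr x powr p)" if "l \<le> x" for x
  proof -
    have "Gf h x < \<infinity>" using Gf_antimono[OF that, of h] fin by (simp add: le_less_trans)
    from layer_le[OF hm hnn this p] show ?thesis unfolding \<Phi>_def Gr_def .
  qed
  have T: "(\<integral>\<^sup>+x\<in>{l<..}. ennreal (p * \<alpha> * (L x powr (\<alpha> * p - 1) / x)) * (\<integral>\<^sup>+s\<in>{x<..}. \<Phi> s \<partial>lborel) \<partial>lborel)
       = (\<integral>\<^sup>+s\<in>{l<..}. \<Phi> s * ennreal (L s powr (\<alpha> * p) - 1) \<partial>lborel)"
    unfolding L_def by (rule tonelli_weight) (use l a p in auto)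
  have K1: "(\<integral>\<^sup>+s\<in>{l<..}. \<Phi> s * ennreal (L s powr (\<alpha> * p) - 1) \<partial>lborel) \<le> ennreal (p * \<alpha>) * J"
  proof -
    have "ennreal (p * \<alpha>) * J = (\<integral>\<^sup>+x\<in>{l<..}. ennreal (p * \<alpha> * (L x powr (\<alpha> * p - 1) / x)) * ennreal (Gr x powr p) \<partial>lborel)"
      unfolding Jeq
    proof (subst nn_integral_cmult[symmetric], measurable, intro nn_integral_cong)
      fix x
      show "ennreal (p * \<alpha>) * (ennreal (L x powr (\<alpha> * p - 1) / x * Gr x powr p) * indicator {l<..} x) =
            ennreal (p * \<alpha> * (L x powr (\<alpha> * p - 1) / x)) * ennreal (Gr x powr p) * indicator {l<..} x"
      proof (cases "l < x")
        case True
        then have "0 < x" using l by simp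
        have nn: "0 \<le> p * \<alpha>" "0 \<le> L x powr (\<alpha> * p - 1) / x * Gr x powr p"
          "0 \<le> p * \<alpha> * (L x powr (\<alpha> * p - 1) / x)" "0 \<le> Gr x powr p"
          using p a \<open>0 < x\<close> by auto
        have 1: "ennreal (p * \<alpha> * (L x powr (\<alpha> * p - 1) / x * Gr x powr p)) = ennreal (p * \<alpha>) * ennreal (L x powr (\<alpha> * p - 1) / x * Gr x powr p)"
          by (rule ennreal_mult[OF nn(1,2)])
        have 2: "ennreal (p * \<alpha> * (L x powr (\<alpha> * p - 1) / x) * Gr x powr p) = ennreal (p * \<alpha> * (L x powr (\<alpha> * p - 1) / x)) * ennreal (Gr x powr p)"
          by (rule ennreal_mult[OF nn(3,4)])
        have 3: "p * \<alpha> * (L x powr (\<alpha> * p - 1) / x * Gr x powr p) = p * \<alpha> * (L x powr (\<alpha> * p - 1) / x) * Gr x powr p"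
          by (simp add: mult_ac)
        have i: "indicator {l<..} x = (1::ennreal)" using True by simp
        show ?thesis unfolding i mult_1_right 1[symmetric] 2[symmetric] 3 ..
      qed simp
    qed
    moreover have "(\<integral>\<^sup>+x\<in>{l<..}. ennreal (p * \<alpha> * (L x powr (\<alpha> * p - 1) / x)) * (\<integral>\<^sup>+s\<in>{x<..}. \<Phi> s \<partial>lborel) \<partial>lborel)
        \<le> (\<integral>\<^sup>+x\<in>{l<..}. ennreal (p * \<alpha> * (L x powr (\<alpha> * p - 1) / x)) * ennreal (Gr x powr p) \<partial>lborel)"
      by (intro nn_integral_mono) (auto split: split_indicator intro!: mult_left_mono Lay)
    ultimately show ?thesis unfolding T by simp
  qed
  have K: "ennreal p * A \<le> ennreal (Gr l powr p) + ennreal (p * \<alpha>) * J"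
  proof -
    have "ennreal p * A = (\<integral>\<^sup>+s\<in>{l<..}. \<Phi> s + \<Phi> s * ennreal (L s powr (\<alpha> * p) - 1) \<partial>lborel)"
      unfolding A_def
    proof (subst nn_integral_cmult[symmetric], measurable, intro nn_integral_cong)
      fix s
      show "ennreal p * (ennreal (L s powr (\<alpha> * p) * Gr s powr (p - 1) * h s) * indicator {l<..} s) =
         (\<Phi> s + \<Phi> s * ennreal (L s powr (\<alpha> * p) - 1)) * indicator {l<..} s"
      proof (cases "l < s")
        case True
        have L1: "1 \<le> L s powr (\<alpha> * p)" using Lgt[OF True] a p by (intro ge_one_powr_ge_zero) auto
        have "\<Phi> s + \<Phi> s * ennreal (L s powr (\<alpha> * p) - 1) = \<Phi> s * (1 + ennreal (L s powr (\<alpha> * p) - 1))"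
          by (simp add: distrib_left)
        also have "1 + ennreal (L s powr (\<alpha> * p) - 1) = ennreal (L s powr (\<alpha> * p))"
          using ennreal_plus[of 1 "L s powr (\<alpha> * p) - 1"] L1 by simp
        finally show ?thesis using True p hnn[of s] unfolding \<Phi>_def
          by (simp add: ennreal_mult[symmetric] mult_ac)
      qed simp
    qed
    also have "\<dots> = (\<integral>\<^sup>+s\<in>{l<..}. \<Phi> s \<partial>lborel) + (\<integral>\<^sup>+s\<in>{l<..}. \<Phi> s * ennreal (L s powr (\<alpha> * p) - 1) \<partial>lborel)"
      by (subst nn_integral_add[symmetric]) (auto intro!: nn_integral_cong simp: distrib_right)
    also have "\<dots> \<le> ennreal (Gr l powr p) + ennreal (p * \<alpha>) * J"
      by (intro add_mono Lay K1) simp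
    finally show ?thesis .
  qed
  obtain j where j: "J = ennreal j" "0 \<le> j" using Jfin unfolding J_def by (cases "Jf \<alpha> p l h") auto
  define g where "g = Gr l"
  have g0: "0 \<le> g" unfolding g_def using Gs[of l] by simp
  have "ennreal (Gr l powr p) + ennreal (p * \<alpha>) * J < top" unfolding j by (simp add: ennreal_mult_less_top)
  then have "ennreal p * A < top" using K by (simp add: le_less_trans)
  then have "A < top" using p by (auto simp: ennreal_mult_less_top)
  then obtain a0 where A0: "A = ennreal a0" "0 \<le> a0" by (cases A) auto
  have Kr: "p * a0 \<le> g powr p + p * \<alpha> * j"
    using K unfolding A0 j g_def using p a j(2) A0(2) Gs(2)[of l]
    by (simp add: ennreal_mult[symmetric] ennreal_plus[symmetric] del: ennreal_plus)
  have R_le: "R \<le> ennreal (p * \<alpha> powr (p - 1) * a0 + (1 - p) * \<alpha> powr p * j)"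
    using Y unfolding A0 j using p a j(2) A0(2)
    by (simp add: ennreal_mult[symmetric] ennreal_plus[symmetric] del: ennreal_plus)
  have "p * \<alpha> powr (p - 1) * a0 + (1 - p) * \<alpha> powr p * j \<le> \<alpha> powr (p - 1) * g powr p + \<alpha> powr p * j"
  proof -
    have "\<alpha> powr (p - 1) * (p * a0) \<le> \<alpha> powr (p - 1) * (g powr p + p * \<alpha> * j)"
      using Kr by (rule mult_left_mono) simp
    moreover have e2: "\<alpha> powr (p - 1) * \<alpha> = \<alpha> powr p" using a by (simp add: powr_diff)
    moreover have "\<alpha> powr (p - 1) * (p * \<alpha> * j) = p * (\<alpha> powr (p - 1) * \<alpha>) * j" by (simp add: mult_ac)
    ultimately have "\<alpha> powr (p - 1) * (p * a0) \<le> \<alpha> powr (p - 1) * g powr p + p * \<alpha> powr p * j"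
      by (simp add: distrib_left)
    moreover have "p * \<alpha> powr (p - 1) * a0 = \<alpha> powr (p - 1) * (p * a0)" by (simp add: mult_ac)
    ultimately have "p * \<alpha> powr (p - 1) * a0 \<le> \<alpha> powr (p - 1) * g powr p + p * \<alpha> powr p * j"
      by (metis (no_types, lifting))
    then show ?thesis by (simp add: algebra_simps)
  qed
  then have "R \<le> ennreal (\<alpha> powr (p - 1) * g powr p + \<alpha> powr p * j)"
    using R_le by (meson ennreal_leI order_trans)
  also have "\<dots> = ennreal (\<alpha> powr (p - 1)) * epowr (Gf h l) p + ennreal (\<alpha> powr p) * Jf \<alpha> p l h"
    using Gs[of l] j g0 unfolding J_def[symmetric] g_def
    by (simp add: epowr_ennreal ennreal_mult[symmetric] ennreal_plus[symmetric] del: ennreal_plus)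
  finally show ?thesis unfolding R_def .
qed

lemma epowr_mono: "a \<le> b \<Longrightarrow> 0 < p \<Longrightarrow> epowr a p \<le> epowr b p"
proof (cases "b = \<infinity>")
  case False
  assume ab: "a \<le> b" and p: "0 < p"
  then have "a \<noteq> \<infinity>" using False by (auto simp: top_unique)
  have "enn2real a \<le> enn2real b" using ab False by (intro enn2real_mono) (auto simp: top.not_eq_extremum)
  then show ?thesis using False \<open>a \<noteq> \<infinity>\<close> p unfolding epowr_def by (auto intro!: ennreal_leI powr_mono2)
qed (simp add: epowr_def)

lemma epowr_zero[simp]: "0 < p \<Longrightarrow> epowr 0 p = 0"
  by (simp add: epowr_def)

lemma epowr_SUP:
  fixes a :: "nat \<Rightarrow> ennreal"
  assumes inc: "incseq a" and p: "0 < p"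
  shows "epowr (SUP n. a n) p = (SUP n. epowr (a n) p)"
proof (rule antisym)
  show "(SUP n. epowr (a n) p) \<le> epowr (SUP n. a n) p"
    by (rule SUP_least, rule epowr_mono) (auto intro: SUP_upper p)
next
  show "epowr (SUP n. a n) p \<le> (SUP n. epowr (a n) p)"
  proof (cases "(SUP n. a n) = \<infinity>")
    case True
    have bound: "ennreal M \<le> (SUP n. epowr (a n) p)" if M: "0 \<le> M" for M
    proof -
      have "ennreal (M powr (1 / p)) < (SUP n. a n)" unfolding True by simp
      then obtain n where n: "ennreal (M powr (1 / p)) < a n" by (auto simp: less_SUP_iff)
      have "ennreal M \<le> epowr (a n) p"
      proof (cases "a n = \<infinity>")
        case False
        then obtain t where t: "a n = ennreal t" "0 \<le> t" by (cases "a n") auto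
        have "M powr (1 / p) < t" using n t by (simp add: ennreal_less_iff)
        then have "(M powr (1 / p)) powr p \<le> t powr p" using p by (intro powr_mono2) auto
        then have "M \<le> t powr p" using M p by (simp add: powr_powr)
        then show ?thesis using t by (simp add: epowr_def ennreal_leI)
      qed (simp add: epowr_def)
      also have "\<dots> \<le> (SUP n. epowr (a n) p)" by (rule SUP_upper) simp
      finally show ?thesis .
    qed
    have "(SUP n. epowr (a n) p) = \<infinity>"
    proof (rule ccontr)
      assume "(SUP n. epowr (a n) p) \<noteq> \<infinity>"
      then obtain s where s: "(SUP n. epowr (a n) p) = ennreal s" "0 \<le> s"
        by (cases "(SUP n. epowr (a n) p)") auto
      have "ennreal (s + 1) \<le> ennreal s" using bound[of "s + 1"] s by simp
      then show False using s by (simp add: ennreal_le_iff)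
    qed
    then show ?thesis by (simp only:) simp
  next
    case False
    define A where "A = (SUP n. a n)"
    have aA: "a n \<le> A" for n unfolding A_def by (rule SUP_upper) simp
    obtain t where t: "A = ennreal t" "0 \<le> t" using False unfolding A_def[symmetric] by (cases A) auto
    have an_fin: "a n = ennreal (enn2real (a n))" for n
      using aA[of n] t by (cases "a n") (auto simp: top_unique)
    have "a \<longlonglongrightarrow> A" unfolding A_def by (rule LIMSEQ_SUP[OF inc])
    then have "(\<lambda>n. enn2real (a n)) \<longlonglongrightarrow> enn2real A"
      using t by (intro tendsto_enn2real) auto
    then have "(\<lambda>n. enn2real (a n)) \<longlonglongrightarrow> t" using t by simp
    then have "(\<lambda>n. enn2real (a n) powr p) \<longlonglongrightarrow> t powr p"
      by (rule tendsto_powr'[OF _ tendsto_const]) (use p in auto)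
    then have lim: "(\<lambda>n. epowr (a n) p) \<longlonglongrightarrow> epowr A p"
    proof -
      assume "(\<lambda>n. enn2real (a n) powr p) \<longlonglongrightarrow> t powr p"
      then have "(\<lambda>n. ennreal (enn2real (a n) powr p)) \<longlonglongrightarrow> ennreal (t powr p)"
        by (rule tendsto_ennrealI)
      moreover have "epowr (a n) p = ennreal (enn2real (a n) powr p)" for n
      proof -
        have "a n \<noteq> top" by (metis an_fin ennreal_neq_top)
        then show ?thesis by (simp add: epowr_def)
      qed
      moreover have "epowr A p = ennreal (t powr p)" using t by (simp add: epowr_def)
      ultimately show ?thesis by simp
    qed
    have "incseq (\<lambda>n. epowr (a n) p)"
      using inc p by (auto simp: incseq_def intro: epowr_mono)
    then have "(\<lambda>n. epowr (a n) p) \<longlonglongrightarrow> (SUP n. epowr (a n) p)" by (rule LIMSEQ_SUP)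
    with lim have "epowr A p = (SUP n. epowr (a n) p)" by (rule LIMSEQ_unique)
    then show ?thesis unfolding A_def by simp
  qed
qed

lemma epowr_measurable[measurable]:
  assumes [measurable]: "g \<in> borel_measurable M"
  shows "(\<lambda>x. epowr (g x) p) \<in> borel_measurable M"
  unfolding epowr_def by measurable

definition trunc :: "(real \<Rightarrow> real) \<Rightarrow> nat \<Rightarrow> real \<Rightarrow> real" where
  "trunc h n x = min (h x) (real n) * indicator {..<real n} x"

lemma trunc_props:
  assumes hnn: "\<And>x. 0 \<le> h x"
  shows "0 \<le> trunc h n x" "trunc h n x \<le> h x" "trunc h n x \<le> real n" "m \<le> n \<Longrightarrow> trunc h m x \<le> trunc h n x"
    "real n \<le> x \<Longrightarrow> trunc h n x = 0"
  using hnn[of x] by (auto simp: trunc_def split: split_indicator)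

lemma trunc_SUP:
  assumes hnn: "\<And>x. 0 \<le> h x"
  shows "(SUP n. ennreal (trunc h n x)) = ennreal (h x)"
proof (rule LIMSEQ_unique[OF LIMSEQ_SUP])
  show "incseq (\<lambda>n. ennreal (trunc h n x))"
    using trunc_props(4)[OF hnn] by (auto simp: incseq_def intro!: ennreal_leI)
  obtain N :: nat where N: "max (h x) x < real N" using reals_Archimedean2 by blast
  have "eventually (\<lambda>n. ennreal (trunc h n x) = ennreal (h x)) sequentially"
  proof (rule eventually_sequentiallyI[of N])
    fix n assume "N \<le> n"
    then have "real N \<le> real n" by simp
    then show "ennreal (trunc h n x) = ennreal (h x)" using N by (auto simp: trunc_def)
  qed
  then show "(\<lambda>n. ennreal (trunc h n x)) \<longlonglongrightarrow> ennreal (h x)" by (rule tendsto_eventually)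
qed

lemma Gf_trunc_SUP:
  assumes [measurable]: "h \<in> borel_measurable borel" and hnn: "\<And>x. 0 \<le> h x"
  shows "Gf h x = (SUP n. Gf (trunc h n) x)" "incseq (\<lambda>n. Gf (trunc h n) x)"
proof -
  have [measurable]: "trunc h n \<in> borel_measurable borel" for n unfolding trunc_def by measurable
  have inc: "incseq (\<lambda>n y. ennreal (trunc h n y) * indicator {x<..} y)"
    using trunc_props(4)[OF hnn] by (auto simp: incseq_def le_fun_def intro!: mult_right_mono ennreal_leI)
  have "Gf h x = (\<integral>\<^sup>+y. (SUP n. ennreal (trunc h n y) * indicator {x<..} y) \<partial>lborel)"
    unfolding Gf_def by (intro nn_integral_cong) (simp add: SUP_mult_right_ennreal[symmetric] trunc_SUP[OF hnn])
  also have "\<dots> = (SUP n. Gf (trunc h n) x)"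
    unfolding Gf_def by (rule nn_integral_monotone_convergence_SUP[OF inc]) measurable
  finally show "Gf h x = (SUP n. Gf (trunc h n) x)" .
  show "incseq (\<lambda>n. Gf (trunc h n) x)"
    using inc unfolding Gf_def incseq_def le_fun_def by (auto intro!: nn_integral_mono)
qed

lemma trunc_fin:
  assumes [measurable]: "h \<in> borel_measurable borel" and hnn: "\<And>x. 0 \<le> h x"
  assumes a: "0 < \<alpha>" and p: "0 < p" and l: "0 < l"
  shows "Gf (trunc h n) l < \<infinity>" "Jf \<alpha> p l (trunc h n) < \<infinity>"
proof -
  have [measurable]: "trunc h n \<in> borel_measurable borel" unfolding trunc_def by measurable
  have "Gf (trunc h n) l \<le> (\<integral>\<^sup>+y. ennreal (real n) * indicator {l<..<l + real n} y \<partial>lborel)"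
    unfolding Gf_def
  proof (intro nn_integral_mono)
    fix y
    show "ennreal (trunc h n y) * indicator {l<..} y \<le> ennreal (real n) * indicator {l<..<l + real n} y"
    proof (cases "l < y \<and> y < real n")
      case True then show ?thesis using trunc_props(3)[OF hnn, where n=n and x=y] l by (auto intro!: ennreal_leI)
    next
      case False then show ?thesis using trunc_props(5)[OF hnn, where n=n and x=y] by (auto split: split_indicator)
    qed
  qed
  also have "\<dots> = ennreal (real n) * ennreal (real n)"
    using emeasure_lborel_Ioo[of l "l + real n"] by (simp add: nn_integral_cmult)
  finally have G: "Gf (trunc h n) l \<le> ennreal (real n) * ennreal (real n)" .
  then show Gfin: "Gf (trunc h n) l < \<infinity>" by (simp add: le_less_trans ennreal_mult_less_top)
  define C where "C = ln ((l + real n) * exp 1 / l) powr (\<alpha> * p) / l"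
  have "Jf \<alpha> p l (trunc h n) \<le> (\<integral>\<^sup>+x. (ennreal C * epowr (Gf (trunc h n) l) p) * indicator {l<..<l + real n} x \<partial>lborel)"
    unfolding Jf_def
  proof (intro nn_integral_mono)
    fix x
    show "ennreal (ln (x * exp 1 / l) powr (\<alpha> * p - 1) / x) * epowr (Gf (trunc h n) x) p * indicator {l<..} x
        \<le> ennreal C * epowr (Gf (trunc h n) l) p * indicator {l<..<l + real n} x"
    proof (cases "l < x \<and> x < real n")
      case True
      then have x: "l < x" "x < l + real n" using l by auto
      have L1: "1 < ln (x * exp 1 / l)" using L_gt1[OF l x(1)] .
      have "ln (x * exp 1 / l) powr (\<alpha> * p - 1) \<le> ln (x * exp 1 / l) powr (\<alpha> * p)"
        using L1 by (intro powr_mono) auto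
      also have "\<dots> \<le> ln ((l + real n) * exp 1 / l) powr (\<alpha> * p)"
      proof -
        have pos: "0 < x * exp 1 / l" using x l by simp
        have "x * exp 1 / l \<le> (l + real n) * exp 1 / l" using x l by (intro divide_right_mono mult_right_mono) auto
        then have "ln (x * exp 1 / l) \<le> ln ((l + real n) * exp 1 / l)" using pos by simp
        then show ?thesis using L1 a p by (intro powr_mono2) auto
      qed
      finally have w1: "ln (x * exp 1 / l) powr (\<alpha> * p - 1) \<le> ln ((l + real n) * exp 1 / l) powr (\<alpha> * p)" .
      have "ln (x * exp 1 / l) powr (\<alpha> * p - 1) / x \<le> ln ((l + real n) * exp 1 / l) powr (\<alpha> * p) / l"
        using w1 x l by (intro frac_le) auto
      then have "ennreal (ln (x * exp 1 / l) powr (\<alpha> * p - 1) / x) \<le> ennreal C"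
        unfolding C_def by (rule ennreal_leI)
      moreover have "epowr (Gf (trunc h n) x) p \<le> epowr (Gf (trunc h n) l) p"
        using x p by (intro epowr_mono Gf_antimono) auto
      ultimately show ?thesis using x by (auto intro!: mult_mono)
    next
      case False
      show ?thesis
      proof (cases "l < x")
        case True
        with False have "real n \<le> x" by simp
        have "Gf (trunc h n) x = 0" unfolding Gf_def
          using trunc_props(5)[OF hnn, where n=n] \<open>real n \<le> x\<close>
          by (intro nn_integral_0_iff_AE[THEN iffD2] AE_I2) (auto split: split_indicator)
        then show ?thesis using p by simp
      qed simp
    qed
  qed
  also have "\<dots> < \<infinity>"
  proof -
    have "epowr (Gf (trunc h n) l) p < \<infinity>" using Gfin by (simp add: epowr_def)
    then show ?thesis using emeasure_lborel_Ioo[of l "l + real n"]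
      by (simp add: nn_integral_cmult ennreal_mult_less_top)
  qed
  finally show "Jf \<alpha> p l (trunc h n) < \<infinity>" .
qed

lemma Rf_mono:
  assumes "\<And>x. 0 \<le> g x" "\<And>x. g x \<le> h x" "0 < p" "0 \<le> l"
  shows "Rf \<alpha> p l g \<le> Rf \<alpha> p l h"
  unfolding Rf_def
proof (intro nn_integral_mono)
  fix x
  show "ennreal (x powr p * ln (x * exp 1 / l) powr ((1 + \<alpha>) * p - 1) * g x powr p / x) * indicator {l<..} x
     \<le> ennreal (x powr p * ln (x * exp 1 / l) powr ((1 + \<alpha>) * p - 1) * h x powr p / x) * indicator {l<..} x"
  proof (cases "l < x")
    case True
    then have "0 < x" using assms by simp
    have "g x powr p \<le> h x powr p" using assms by (intro powr_mono2) auto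
    then have "x powr p * ln (x * exp 1 / l) powr ((1 + \<alpha>) * p - 1) * g x powr p / x
       \<le> x powr p * ln (x * exp 1 / l) powr ((1 + \<alpha>) * p - 1) * h x powr p / x"
      using \<open>0 < x\<close> by (intro divide_right_mono mult_left_mono) auto
    then show ?thesis by (intro mult_right_mono ennreal_leI) auto
  qed simp
qed

lemma mainA_gen:
  fixes \<alpha> p l :: real
  assumes hm[measurable]: "h \<in> borel_measurable borel" and hnn: "\<And>x. 0 \<le> h x"
  assumes a: "0 < \<alpha>" and p: "1 < p" and l: "0 < l"
  shows "ennreal (\<alpha> powr (p - 1)) * epowr (Gf h l) p + ennreal (\<alpha> powr p) * Jf \<alpha> p l h \<le> Rf \<alpha> p l h"
proof -
  have [measurable]: "trunc h n \<in> borel_measurable borel" for n unfolding trunc_def by measurable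
  define w where "w x = ennreal (ln (x * exp 1 / l) powr (\<alpha> * p - 1) / x)" for x
  have [measurable]: "w \<in> borel_measurable borel" unfolding w_def by measurable
  define an where "an n = epowr (Gf (trunc h n) l) p" for n
  define bn where "bn n = Jf \<alpha> p l (trunc h n)" for n
  have p0: "0 < p" using p by simp
  have inc_e: "incseq (\<lambda>n. epowr (Gf (trunc h n) x) p)" for x
    using Gf_trunc_SUP(2)[OF hm hnn, of x] p0 by (auto simp: incseq_def intro: epowr_mono)
  have e_SUP: "epowr (Gf h x) p = (SUP n. epowr (Gf (trunc h n) x) p)" for x
    unfolding Gf_trunc_SUP(1)[OF hm hnn, of x] by (rule epowr_SUP[OF Gf_trunc_SUP(2)[OF hm hnn] p0])
  have inc_a: "incseq an" unfolding an_def using inc_e .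
  have inc_b: "incseq bn" unfolding bn_def Jf_def incseq_def
    using inc_e by (auto simp: incseq_def intro!: nn_integral_mono mult_right_mono mult_left_mono)
  have Jsup: "Jf \<alpha> p l h = (SUP n. bn n)"
  proof -
    have "Jf \<alpha> p l h = (\<integral>\<^sup>+x. (SUP n. w x * epowr (Gf (trunc h n) x) p * indicator {l<..} x) \<partial>lborel)"
      unfolding Jf_def w_def[symmetric]
      by (intro nn_integral_cong) (simp add: e_SUP SUP_mult_left_ennreal SUP_mult_right_ennreal)
    also have "\<dots> = (SUP n. bn n)"
      unfolding bn_def Jf_def w_def[symmetric]
    proof (rule nn_integral_monotone_convergence_SUP)
      show "incseq (\<lambda>n x. w x * epowr (Gf (trunc h n) x) p * indicator {l<..} x)"
        using inc_e by (auto simp: incseq_def le_fun_def intro!: mult_right_mono mult_left_mono)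
    qed measurable
    finally show ?thesis .
  qed
  have each: "ennreal (\<alpha> powr (p - 1)) * an n + ennreal (\<alpha> powr p) * bn n \<le> Rf \<alpha> p l h" for n
  proof -
    have "ennreal (\<alpha> powr (p - 1)) * an n + ennreal (\<alpha> powr p) * bn n \<le> Rf \<alpha> p l (trunc h n)"
      unfolding an_def bn_def
      by (rule mainA[OF _ _ a p l trunc_fin[OF hm hnn a p0 l]]) (use trunc_props(1)[OF hnn] in auto)
    also have "\<dots> \<le> Rf \<alpha> p l h" by (rule Rf_mono) (use trunc_props[OF hnn] p0 l in auto)
    finally show ?thesis .
  qed
  have "ennreal (\<alpha> powr (p - 1)) * epowr (Gf h l) p + ennreal (\<alpha> powr p) * Jf \<alpha> p l h
      = (SUP n. ennreal (\<alpha> powr (p - 1)) * an n) + (SUP n. ennreal (\<alpha> powr p) * bn n)"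
    unfolding Jsup e_SUP an_def by (simp add: SUP_mult_left_ennreal)
  also have "\<dots> = (SUP n. ennreal (\<alpha> powr (p - 1)) * an n + ennreal (\<alpha> powr p) * bn n)"
    by (rule ennreal_SUP_add[symmetric])
       (use inc_a inc_b in \<open>auto simp: incseq_def intro: mult_left_mono\<close>)
  also have "\<dots> \<le> Rf \<alpha> p l h" by (rule SUP_least) (rule each)
  finally show ?thesis .
qed

lemma reduce:
  fixes l :: real
  assumes adm: "admissible l f" and l: "0 \<le> l"
  obtains h where "h \<in> borel_measurable borel" "\<And>x. 0 \<le> h x"
    "\<And>c1 c2. hardy_lhs c1 c2 \<alpha> p l f = ennreal c1 * epowr (Gf h l) p + ennreal c2 * Jf \<alpha> p l h"
    "hardy_rhs \<alpha> p l f = Rf \<alpha> p l h"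
proof -
  have g: "(\<lambda>x. indicator {l<..} x *\<^sub>R f x) \<in> borel_measurable (completion lborel)"
    using adm unfolding admissible_def set_borel_measurable_def by simp
  obtain g' where g'[measurable]: "g' \<in> borel_measurable lborel"
    and ae: "AE x in lborel. indicator {l<..} x *\<^sub>R f x = g' x"
    using completion_ex_borel_measurable_real[OF g] by blast
  define h where "h x = indicator {l<..} x * max 0 (g' x)" for x
  have hm: "h \<in> borel_measurable borel" unfolding h_def using g' by (simp add: measurable_lborel1)
  have hnn: "0 \<le> h x" for x unfolding h_def by (auto split: split_indicator)
  have fnn: "\<And>x. l < x \<Longrightarrow> 0 \<le> f x" using adm unfolding admissible_def by auto
  have ae2: "AE x in lborel. l < x \<longrightarrow> f x = h x"
  proof (use ae in eventually_elim, intro impI)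
    fix x assume e: "indicator {l<..} x *\<^sub>R f x = g' x" and x: "l < x"
    then have "f x = g' x" by simp
    with fnn[OF x] show "f x = h x" using x by (simp add: h_def)
  qed
  have inner: "(\<integral>\<^sup>+y\<in>{x<..}. ennreal (f y) \<partial>lborel) = Gf h x" if "l \<le> x" for x
    unfolding Gf_def
    by (intro nn_integral_cong_AE, use ae2 in eventually_elim) (use that in \<open>auto split: split_indicator\<close>)
  show ?thesis
  proof (rule that[OF hm hnn])
    fix c1 c2
    show "hardy_lhs c1 c2 \<alpha> p l f = ennreal c1 * epowr (Gf h l) p + ennreal c2 * Jf \<alpha> p l h"
    proof -
      have "(\<integral>\<^sup>+x\<in>{l<..}. ennreal (ln (x * exp 1 / l) powr (\<alpha> * p - 1) / x)
         * epowr (\<integral>\<^sup>+y\<in>{x<..}. ennreal (f y) \<partial>lborel) p \<partial>lborel) = Jf \<alpha> p l h"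
        unfolding Jf_def
      proof (intro nn_integral_cong)
        fix x
        show "ennreal (ln (x * exp 1 / l) powr (\<alpha> * p - 1) / x) * epowr (\<integral>\<^sup>+y\<in>{x<..}. ennreal (f y) \<partial>lborel) p * indicator {l<..} x
            = ennreal (ln (x * exp 1 / l) powr (\<alpha> * p - 1) / x) * epowr (Gf h x) p * indicator {l<..} x"
          by (cases "l < x") (auto simp: inner)
      qed
      then show ?thesis
        unfolding hardy_lhs_def nn_integral_completion inner[OF order_refl] by simp
    qed
    show "hardy_rhs \<alpha> p l f = Rf \<alpha> p l h"
      unfolding hardy_rhs_def Rf_def nn_integral_completion
      by (intro nn_integral_cong_AE, use ae2 in eventually_elim) (auto split: split_indicator)
  qed
qed

lemma epowr_one[simp]: "epowr 1 p = 1"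
  unfolding epowr_def by simp

lemma L_at_top:
  fixes l :: real assumes "0 < l"
  shows "filterlim (\<lambda>y. ln (y * exp 1 / l)) at_top at_top"
proof -
  have "filterlim (\<lambda>y. (exp 1 / l) * y) at_top at_top"
    using assms by (intro filterlim_tendsto_pos_mult_at_top[OF tendsto_const _ filterlim_ident]) auto
  moreover have "(\<lambda>y. (exp 1 / l) * y) = (\<lambda>y. y * exp 1 / l)" by (rule ext) simp
  ultimately have "filterlim (\<lambda>y. y * exp 1 / l) at_top at_top" by simp
  then show ?thesis by (rule filterlim_compose[OF ln_at_top])
qed

lemma tail_FTC:
  fixes l x0 \<gamma> c :: real
  assumes l: "0 < l" "l \<le> x0" and g: "\<gamma> < 0" and c: "0 \<le> c"
  shows "(\<integral>\<^sup>+y\<in>{x0<..}. ennreal (c * ln (y * exp 1 / l) powr (\<gamma> - 1) / y) \<partial>lborel)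
       = ennreal (c * ln (x0 * exp 1 / l) powr \<gamma> / (- \<gamma>))"
proof -
  have "(\<integral>\<^sup>+y\<in>{x0<..}. ennreal (c * ln (y * exp 1 / l) powr (\<gamma> - 1) / y) \<partial>lborel)
       = ennreal (0 - c * ln (x0 * exp 1 / l) powr \<gamma> / \<gamma>)"
  proof (rule nn_FTC_Ioi[where F="\<lambda>y. c * ln (y * exp 1 / l) powr \<gamma> / \<gamma>"])
    fix y assume y: "x0 < y"
    then have y0: "0 < y" and ly: "l < y" using l by auto
    have Lp: "0 < ln (y * exp 1 / l)" using L_gt1[OF l(1) ly] by linarith
    have "DERIV (\<lambda>y. ln (y * exp 1 / l) powr \<gamma>) y :> \<gamma> * ln (y * exp 1 / l) powr (\<gamma> - of_nat 1) * (1 / y)"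
      by (rule DERIV_fun_powr[OF DERIV_L[OF l(1) y0] Lp])
    then have "DERIV (\<lambda>y. c * ln (y * exp 1 / l) powr \<gamma> / \<gamma>) y :> c * (\<gamma> * ln (y * exp 1 / l) powr (\<gamma> - of_nat 1) * (1 / y)) / \<gamma>"
      by (rule DERIV_cdivide[OF DERIV_cmult])
    then show "DERIV (\<lambda>y. c * ln (y * exp 1 / l) powr \<gamma> / \<gamma>) y :> c * ln (y * exp 1 / l) powr (\<gamma> - 1) / y"
      using g by simp
    show "isCont (\<lambda>y. c * ln (y * exp 1 / l) powr (\<gamma> - 1) / y) y"
      using Lp y0 l by (intro continuous_intros) auto
    show "0 \<le> c * ln (y * exp 1 / l) powr (\<gamma> - 1) / y" using c y0 by simp
  next
    have x0: "0 < x0" using l by simp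
    have Lp: "0 < ln (x0 * exp 1 / l)"
    proof -
      have "l * exp 1 \<le> x0 * exp 1" using l by simp
      then have "exp 1 \<le> x0 * exp 1 / l" using l by (simp add: field_simps)
      then have "ln (exp 1) \<le> ln (x0 * exp 1 / l)" using x0 l by (subst ln_le_cancel_iff) auto
      then show ?thesis by simp
    qed
    show "((\<lambda>y. c * ln (y * exp 1 / l) powr \<gamma> / \<gamma>) \<longlongrightarrow> c * ln (x0 * exp 1 / l) powr \<gamma> / \<gamma>) (at_right x0)"
      using Lp x0 l g by (intro tendsto_intros) auto
    have "((\<lambda>y. ln (y * exp 1 / l) powr \<gamma>) \<longlongrightarrow> 0) at_top"
      by (rule tendsto_neg_powr[OF g L_at_top[OF l(1)]])
    then have "((\<lambda>y. c * ln (y * exp 1 / l) powr \<gamma> / \<gamma>) \<longlongrightarrow> c * 0 / \<gamma>) at_top"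
      by (intro tendsto_divide tendsto_mult tendsto_const) (use g in auto)
    then show "((\<lambda>y. c * ln (y * exp 1 / l) powr \<gamma> / \<gamma>) \<longlongrightarrow> 0) at_top" by simp
  qed
  then show ?thesis by (simp only: diff_0 minus_divide_right)
qed

definition fb :: "real \<Rightarrow> real \<Rightarrow> real \<Rightarrow> real" where
  "fb \<beta> l x = \<beta> * ln (x * exp 1 / l) powr (- \<beta> - 1) / x"

lemma fb_vals:
  fixes \<alpha> \<beta> p l :: real
  assumes l: "0 < l" and a: "0 < \<alpha>" and p: "0 < p" and b: "\<alpha> < \<beta>"
  shows "admissible l (fb \<beta> l)"
    "hardy_lhs c1 c2 \<alpha> p l (fb \<beta> l) = ennreal c1 + ennreal c2 * ennreal (1 / ((\<beta> - \<alpha>) * p))"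
    "hardy_rhs \<alpha> p l (fb \<beta> l) = ennreal (\<beta> powr p / ((\<beta> - \<alpha>) * p))"
proof -
  have b0: "0 < \<beta>" using a b by simp
  have fbm: "fb \<beta> l \<in> borel_measurable borel" unfolding fb_def by measurable
  show "admissible l (fb \<beta> l)"
    unfolding admissible_def set_borel_measurable_def
  proof
    show "(\<lambda>x. indicator {l<..} x *\<^sub>R fb \<beta> l x) \<in> borel_measurable lebesgue"
      using fbm by (intro measurable_completion) (simp add: measurable_lborel1)
    show "\<forall>x>l. 0 \<le> fb \<beta> l x" using l b0 by (auto simp: fb_def)
  qed
  have L1: "ln (l * exp 1 / l) = 1" using l by simp
  have inner: "(\<integral>\<^sup>+y\<in>{x<..}. ennreal (fb \<beta> l y) \<partial>lborel) = ennreal (ln (x * exp 1 / l) powr (- \<beta>))"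
    if "l \<le> x" for x
    using tail_FTC[OF l that, of "- \<beta>" \<beta>] b0 unfolding fb_def by simp
  have J: "(\<integral>\<^sup>+x\<in>{l<..}. ennreal (ln (x * exp 1 / l) powr (\<alpha> * p - 1) / x)
         * epowr (\<integral>\<^sup>+y\<in>{x<..}. ennreal (fb \<beta> l y) \<partial>lborel) p \<partial>lborel) = ennreal (1 / ((\<beta> - \<alpha>) * p))"
  proof -
    have "(\<integral>\<^sup>+x\<in>{l<..}. ennreal (ln (x * exp 1 / l) powr (\<alpha> * p - 1) / x)
         * epowr (\<integral>\<^sup>+y\<in>{x<..}. ennreal (fb \<beta> l y) \<partial>lborel) p \<partial>lborel)
       = (\<integral>\<^sup>+x\<in>{l<..}. ennreal (1 * ln (x * exp 1 / l) powr ((\<alpha> - \<beta>) * p - 1) / x) \<partial>lborel)"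
    proof (intro nn_integral_cong)
      fix x
      show "ennreal (ln (x * exp 1 / l) powr (\<alpha> * p - 1) / x) * epowr (\<integral>\<^sup>+y\<in>{x<..}. ennreal (fb \<beta> l y) \<partial>lborel) p * indicator {l<..} x
          = ennreal (1 * ln (x * exp 1 / l) powr ((\<alpha> - \<beta>) * p - 1) / x) * indicator {l<..} x"
      proof (cases "l < x")
        case True
        have x0: "0 < x" using True l by simp
        have Lp: "0 < ln (x * exp 1 / l)" using L_gt1[OF l True] by simp
        have nn: "0 \<le> ln (x * exp 1 / l) powr (\<alpha> * p - 1) / x" "0 \<le> (ln (x * exp 1 / l) powr (- \<beta>)) powr p"
          using x0 by auto
        show ?thesis using True x0
        proof -
          have eq2: "ln (x * exp 1 / l) powr (\<alpha> * p - 1) * (ln (x * exp 1 / l) powr (- \<beta>)) powr p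
             = ln (x * exp 1 / l) powr ((\<alpha> - \<beta>) * p - 1)"
          proof -
            have "ln (x * exp 1 / l) powr (\<alpha> * p - 1) * (ln (x * exp 1 / l) powr (- \<beta>)) powr p
               = ln (x * exp 1 / l) powr (\<alpha> * p - 1) * ln (x * exp 1 / l) powr (- \<beta> * p)"
              by (simp add: powr_powr)
            also have "\<dots> = ln (x * exp 1 / l) powr (\<alpha> * p - 1 + - \<beta> * p)" by (rule powr_add[symmetric])
            also have "\<alpha> * p - 1 + - \<beta> * p = (\<alpha> - \<beta>) * p - 1" by (simp add: algebra_simps)
            finally show ?thesis .
          qed
          show ?thesis using True x0
            by (simp add: inner epowr_ennreal ennreal_mult[OF nn, symmetric] eq2)
        qed
      qed simp
    qed
    also have "\<dots> = ennreal (1 * ln (l * exp 1 / l) powr ((\<alpha> - \<beta>) * p) / (- ((\<alpha> - \<beta>) * p)))"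
      by (rule tail_FTC) (use l p b in \<open>auto simp: mult_neg_pos\<close>)
    also have "\<dots> = ennreal (1 / ((\<beta> - \<alpha>) * p))" using l by (simp add: algebra_simps)
    finally show ?thesis .
  qed
  show "hardy_lhs c1 c2 \<alpha> p l (fb \<beta> l) = ennreal c1 + ennreal c2 * ennreal (1 / ((\<beta> - \<alpha>) * p))"
    unfolding hardy_lhs_def nn_integral_completion J inner[OF order_refl] L1
    by (simp add: epowr_ennreal)
  show "hardy_rhs \<alpha> p l (fb \<beta> l) = ennreal (\<beta> powr p / ((\<beta> - \<alpha>) * p))"
  proof -
    have "hardy_rhs \<alpha> p l (fb \<beta> l) = (\<integral>\<^sup>+x\<in>{l<..}. ennreal (\<beta> powr p * ln (x * exp 1 / l) powr ((\<alpha> - \<beta>) * p - 1) / x) \<partial>lborel)"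
      unfolding hardy_rhs_def nn_integral_completion
    proof (intro nn_integral_cong)
      fix x
      show "ennreal (x powr p * ln (x * exp 1 / l) powr ((1 + \<alpha>) * p - 1) * fb \<beta> l x powr p / x) * indicator {l<..} x
          = ennreal (\<beta> powr p * ln (x * exp 1 / l) powr ((\<alpha> - \<beta>) * p - 1) / x) * indicator {l<..} x"
      proof (cases "l < x")
        case True
        have x0: "0 < x" using True l by simp
        have Lp: "0 < ln (x * exp 1 / l)" using L_gt1[OF l True] by simp
        define Lx where "Lx = ln (x * exp 1 / l)"
        have Lp': "0 < Lx" using Lp unfolding Lx_def .
        have "fb \<beta> l x powr p = \<beta> powr p * Lx powr ((- \<beta> - 1) * p) / x powr p"
          unfolding fb_def Lx_def[symmetric] using Lp' x0 b0
          by (simp add: powr_divide powr_mult powr_powr)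
        then have "x powr p * Lx powr ((1 + \<alpha>) * p - 1) * fb \<beta> l x powr p / x
            = \<beta> powr p * (Lx powr ((1 + \<alpha>) * p - 1) * Lx powr ((- \<beta> - 1) * p)) / x"
          using x0 by simp
        also have "Lx powr ((1 + \<alpha>) * p - 1) * Lx powr ((- \<beta> - 1) * p) = Lx powr ((1 + \<alpha>) * p - 1 + (- \<beta> - 1) * p)"
          by (rule powr_add[symmetric])
        also have "(1 + \<alpha>) * p - 1 + (- \<beta> - 1) * p = (\<alpha> - \<beta>) * p - 1" by (simp add: algebra_simps)
        finally have "x powr p * Lx powr ((1 + \<alpha>) * p - 1) * fb \<beta> l x powr p / x = \<beta> powr p * Lx powr ((\<alpha> - \<beta>) * p - 1) / x" .
        then show ?thesis unfolding Lx_def by (rule arg_cong[where f="\<lambda>t. ennreal t * indicator {l<..} x"])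
      qed simp
    qed
    also have "\<dots> = ennreal (\<beta> powr p * ln (l * exp 1 / l) powr ((\<alpha> - \<beta>) * p) / (- ((\<alpha> - \<beta>) * p)))"
      by (rule tail_FTC) (use l p b in \<open>auto simp: mult_neg_pos\<close>)
    also have "\<dots> = ennreal (\<beta> powr p / ((\<beta> - \<alpha>) * p))" using l by (simp add: algebra_simps)
    finally show ?thesis .
  qed
qed

lemma powr_quot_lim:
  fixes \<alpha> p :: real assumes a: "0 < \<alpha>"
  shows "((\<lambda>b. (b powr p - \<alpha> powr p) / (b - \<alpha>)) \<longlongrightarrow> p * \<alpha> powr (p - 1)) (at_right \<alpha>)"
proof -
  have "((\<lambda>b. b powr p) has_real_derivative p * \<alpha> powr (p - 1)) (at \<alpha>)"
    using a by (rule has_real_derivative_powr)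
  then have "((\<lambda>b. (b powr p - \<alpha> powr p) / (b - \<alpha>)) \<longlongrightarrow> p * \<alpha> powr (p - 1)) (at \<alpha>)"
    by (simp add: has_field_derivative_iff)
  then show ?thesis by (simp add: filterlim_at_split)
qed

lemma exists_beta:
  fixes \<alpha> p :: real assumes a: "0 < \<alpha>"
  shows "p * \<alpha> powr (p - 1) < K \<Longrightarrow> \<exists>b>\<alpha>. (b powr p - \<alpha> powr p) / (b - \<alpha>) < K"
    and "K < p * \<alpha> powr (p - 1) \<Longrightarrow> \<exists>b>\<alpha>. K < (b powr p - \<alpha> powr p) / (b - \<alpha>)"
    and "\<alpha> powr p < K \<Longrightarrow> \<exists>b>\<alpha>. b powr p - \<alpha> powr (p - 1) * p * (b - \<alpha>) < K"
    and "K < \<alpha> powr p \<Longrightarrow> \<exists>b>\<alpha>. K < b powr p - \<alpha> powr (p - 1) * p * (b - \<alpha>)"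
proof -
  have gt: "eventually (\<lambda>b. \<alpha> < b) (at_right \<alpha>)" by (simp add: eventually_at_right_less)
  have nb: "at_right \<alpha> \<noteq> (bot :: real filter)" by simp
  have c: "((\<lambda>b. b powr p - \<alpha> powr (p - 1) * p * (b - \<alpha>)) \<longlongrightarrow> \<alpha> powr p - \<alpha> powr (p - 1) * p * (\<alpha> - \<alpha>)) (at_right \<alpha>)"
    using a by (intro tendsto_intros) auto
  then have c': "((\<lambda>b. b powr p - \<alpha> powr (p - 1) * p * (b - \<alpha>)) \<longlongrightarrow> \<alpha> powr p) (at_right \<alpha>)" by simp
  show "\<exists>b>\<alpha>. (b powr p - \<alpha> powr p) / (b - \<alpha>) < K" if "p * \<alpha> powr (p - 1) < K"
  proof -
    have "eventually (\<lambda>b. (b powr p - \<alpha> powr p) / (b - \<alpha>) < K) (at_right \<alpha>)"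
      using order_tendstoD(2)[OF powr_quot_lim[OF a] that] .
    then have "eventually (\<lambda>b. \<alpha> < b \<and> (b powr p - \<alpha> powr p) / (b - \<alpha>) < K) (at_right \<alpha>)"
      using gt by eventually_elim auto
    then show ?thesis using eventually_happens'[OF nb] by blast
  qed
  show "\<exists>b>\<alpha>. K < (b powr p - \<alpha> powr p) / (b - \<alpha>)" if "K < p * \<alpha> powr (p - 1)"
  proof -
    have "eventually (\<lambda>b. K < (b powr p - \<alpha> powr p) / (b - \<alpha>)) (at_right \<alpha>)"
      using order_tendstoD(1)[OF powr_quot_lim[OF a] that] .
    then have "eventually (\<lambda>b. \<alpha> < b \<and> K < (b powr p - \<alpha> powr p) / (b - \<alpha>)) (at_right \<alpha>)"
      using gt by eventually_elim auto
    then show ?thesis using eventually_happens'[OF nb] by blast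
  qed
  show "\<exists>b>\<alpha>. b powr p - \<alpha> powr (p - 1) * p * (b - \<alpha>) < K" if "\<alpha> powr p < K"
  proof -
    have "eventually (\<lambda>b. b powr p - \<alpha> powr (p - 1) * p * (b - \<alpha>) < K) (at_right \<alpha>)"
      using order_tendstoD(2)[OF c' that] .
    then have "eventually (\<lambda>b. \<alpha> < b \<and> b powr p - \<alpha> powr (p - 1) * p * (b - \<alpha>) < K) (at_right \<alpha>)"
      using gt by eventually_elim auto
    then show ?thesis using eventually_happens'[OF nb] by blast
  qed
  show "\<exists>b>\<alpha>. K < b powr p - \<alpha> powr (p - 1) * p * (b - \<alpha>)" if "K < \<alpha> powr p"
  proof -
    have "eventually (\<lambda>b. K < b powr p - \<alpha> powr (p - 1) * p * (b - \<alpha>)) (at_right \<alpha>)"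
      using order_tendstoD(1)[OF c' that] .
    then have "eventually (\<lambda>b. \<alpha> < b \<and> K < b powr p - \<alpha> powr (p - 1) * p * (b - \<alpha>)) (at_right \<alpha>)"
      using gt by eventually_elim auto
    then show ?thesis using eventually_happens'[OF nb] by blast
  qed
qed

lemma div_lt:
  fixes K X A B :: real
  assumes "0 < K" "X < A * K + B" shows "X / K < A + B * (1 / K)"
proof -
  have "X / K < (A * K + B) / K" using assms by (intro divide_strict_right_mono)
  also have "\<dots> = A + B * (1 / K)" using assms(1) by (simp add: add_divide_distrib)
  finally show ?thesis .
qed

lemma div_gt:
  fixes K X A B :: real
  assumes "0 < K" "A * K + B < X" shows "A + B * (1 / K) < X / K"
proof -
  have "A + B * (1 / K) = (A * K + B) / K" using assms(1) by (simp add: add_divide_distrib)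
  also have "\<dots> < X / K" using assms by (intro divide_strict_right_mono)
  finally show ?thesis .
qed

theorem theorem5p4:
  fixes \<alpha> p l :: real
  assumes "\<alpha> > 0" and "p > 0" and "0 < l"
  shows "(p > 1 \<longrightarrow>
            (\<forall>f. admissible l f \<longrightarrow>
                 hardy_lhs (\<alpha> powr (p - 1)) (\<alpha> powr p) \<alpha> p l f \<le> hardy_rhs \<alpha> p l f)
          \<and> (\<forall>c. c > \<alpha> powr (p - 1) \<longrightarrow>
                 (\<exists>f. admissible l f \<and> hardy_rhs \<alpha> p l f < hardy_lhs c (\<alpha> powr p) \<alpha> p l f))
          \<and> (\<forall>c. c > \<alpha> powr p \<longrightarrow>
                 (\<exists>f. admissible l f \<and> hardy_rhs \<alpha> p l f < hardy_lhs (\<alpha> powr (p - 1)) c \<alpha> p l f)))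
       \<and> (p \<le> 1 \<longrightarrow>
            (\<forall>f. admissible l f \<longrightarrow>
                 hardy_rhs \<alpha> p l f \<le> hardy_lhs (\<alpha> powr (p - 1)) (\<alpha> powr p) \<alpha> p l f)
          \<and> (\<forall>c. c < \<alpha> powr (p - 1) \<longrightarrow>
                 (\<exists>f. admissible l f \<and> hardy_lhs c (\<alpha> powr p) \<alpha> p l f < hardy_rhs \<alpha> p l f))
          \<and> (\<forall>c. c < \<alpha> powr p \<longrightarrow>
                 (\<exists>f. admissible l f \<and> hardy_lhs (\<alpha> powr (p - 1)) c \<alpha> p l f < hardy_rhs \<alpha> p l f)))"
proof -
  note a = assms(1) and p0 = assms(2) and l = assms(3)
  have l0: "0 \<le> l" using l by simp
  have ap: "0 \<le> \<alpha> powr p" "0 \<le> \<alpha> powr (p - 1)" by simp_all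
  have vals: "admissible l (fb b l)"
      "hardy_lhs c1 c2 \<alpha> p l (fb b l) = ennreal (c1 + c2 * (1 / ((b - \<alpha>) * p)))"
      "hardy_rhs \<alpha> p l (fb b l) = ennreal (b powr p / ((b - \<alpha>) * p))"
    if "\<alpha> < b" "0 \<le> c1" "0 \<le> c2" for b c1 c2
  proof -
    have K: "0 < (b - \<alpha>) * p" using that p0 by simp
    show "admissible l (fb b l)" using fb_vals(1)[OF l a p0 that(1)] .
    show "hardy_lhs c1 c2 \<alpha> p l (fb b l) = ennreal (c1 + c2 * (1 / ((b - \<alpha>) * p)))"
    proof -
      have q: "0 \<le> 1 / ((b - \<alpha>) * p)" using K by simp
      show ?thesis unfolding fb_vals(2)[OF l a p0 that(1)]
          ennreal_plus[OF that(2) mult_nonneg_nonneg[OF that(3) q]] ennreal_mult[OF that(3) q] ..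
    qed
    show "hardy_rhs \<alpha> p l (fb b l) = ennreal (b powr p / ((b - \<alpha>) * p))"
      using fb_vals(3)[OF l a p0 that(1)] .
  qed
  have A: "p > 1 \<longrightarrow> (\<forall>f. admissible l f \<longrightarrow>
                 hardy_lhs (\<alpha> powr (p - 1)) (\<alpha> powr p) \<alpha> p l f \<le> hardy_rhs \<alpha> p l f)
          \<and> (\<forall>c. c > \<alpha> powr (p - 1) \<longrightarrow>
                 (\<exists>f. admissible l f \<and> hardy_rhs \<alpha> p l f < hardy_lhs c (\<alpha> powr p) \<alpha> p l f))
          \<and> (\<forall>c. c > \<alpha> powr p \<longrightarrow>
                 (\<exists>f. admissible l f \<and> hardy_rhs \<alpha> p l f < hardy_lhs (\<alpha> powr (p - 1)) c \<alpha> p l f))" (is "_ \<longrightarrow> ?A")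
  proof
    assume p: "1 < p"
    have i: "hardy_lhs (\<alpha> powr (p - 1)) (\<alpha> powr p) \<alpha> p l f \<le> hardy_rhs \<alpha> p l f" if adm: "admissible l f" for f
    proof -
      obtain h where h: "h \<in> borel_measurable borel" "\<And>x. 0 \<le> h x"
        "\<And>c1 c2. hardy_lhs c1 c2 \<alpha> p l f = ennreal c1 * epowr (Gf h l) p + ennreal c2 * Jf \<alpha> p l h"
        "hardy_rhs \<alpha> p l f = Rf \<alpha> p l h"
        using reduce[OF adm l0] by metis
      show ?thesis unfolding h(3,4) by (rule mainA_gen[OF h(1,2) a p l])
    qed
    have ii: "\<exists>f. admissible l f \<and> hardy_rhs \<alpha> p l f < hardy_lhs c (\<alpha> powr p) \<alpha> p l f"
      if c: "c > \<alpha> powr (p - 1)" for c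
    proof -
      have "p * \<alpha> powr (p - 1) < p * c" using c p by simp
      then obtain b where b: "\<alpha> < b" "(b powr p - \<alpha> powr p) / (b - \<alpha>) < p * c"
        using exists_beta(1)[OF a] by blast
      have c0: "0 \<le> c" using c a by (smt (verit) powr_gt_zero)
      have K: "0 < (b - \<alpha>) * p" using b p by simp
      have "b powr p - \<alpha> powr p < p * c * (b - \<alpha>)" using b by (simp add: pos_divide_less_eq)
      then have ineq: "b powr p / ((b - \<alpha>) * p) < c + \<alpha> powr p * (1 / ((b - \<alpha>) * p))"
        using K by (intro div_lt) (simp_all add: algebra_simps)
      have "hardy_rhs \<alpha> p l (fb b l) < hardy_lhs c (\<alpha> powr p) \<alpha> p l (fb b l)"
        unfolding vals(2,3)[OF b(1) c0 ap(1)]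
        by (rule ennreal_lessI[OF le_less_trans[OF _ ineq] ineq]) (use K in simp)
      then show ?thesis using vals(1)[OF b(1) c0 c0] by blast
    qed
    have iii: "\<exists>f. admissible l f \<and> hardy_rhs \<alpha> p l f < hardy_lhs (\<alpha> powr (p - 1)) c \<alpha> p l f"
      if c: "c > \<alpha> powr p" for c
    proof -
      obtain b where b: "\<alpha> < b" "b powr p - \<alpha> powr (p - 1) * p * (b - \<alpha>) < c"
        using exists_beta(3)[OF a c] by blast
      have c0: "0 \<le> c" using c a by (smt (verit) powr_gt_zero)
      have K: "0 < (b - \<alpha>) * p" using b p by simp
      have ineq: "b powr p / ((b - \<alpha>) * p) < \<alpha> powr (p - 1) + c * (1 / ((b - \<alpha>) * p))"
        using K b(2) by (intro div_lt) (simp_all add: algebra_simps)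
      have "hardy_rhs \<alpha> p l (fb b l) < hardy_lhs (\<alpha> powr (p - 1)) c \<alpha> p l (fb b l)"
        unfolding vals(2,3)[OF b(1) ap(2) c0]
        by (rule ennreal_lessI[OF le_less_trans[OF _ ineq] ineq]) (use K in simp)
      then show ?thesis using vals(1)[OF b(1) c0 c0] by blast
    qed
    show ?A using i ii iii by blast
  qed
  have B: "p \<le> 1 \<longrightarrow> (\<forall>f. admissible l f \<longrightarrow>
                 hardy_rhs \<alpha> p l f \<le> hardy_lhs (\<alpha> powr (p - 1)) (\<alpha> powr p) \<alpha> p l f)
          \<and> (\<forall>c. c < \<alpha> powr (p - 1) \<longrightarrow>
                 (\<exists>f. admissible l f \<and> hardy_lhs c (\<alpha> powr p) \<alpha> p l f < hardy_rhs \<alpha> p l f))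
          \<and> (\<forall>c. c < \<alpha> powr p \<longrightarrow>
                 (\<exists>f. admissible l f \<and> hardy_lhs (\<alpha> powr (p - 1)) c \<alpha> p l f < hardy_rhs \<alpha> p l f))" (is "_ \<longrightarrow> ?B")
  proof
    assume p: "p \<le> 1"
    have i: "hardy_rhs \<alpha> p l f \<le> hardy_lhs (\<alpha> powr (p - 1)) (\<alpha> powr p) \<alpha> p l f" if adm: "admissible l f" for f
    proof -
      obtain h where h: "h \<in> borel_measurable borel" "\<And>x. 0 \<le> h x"
        "\<And>c1 c2. hardy_lhs c1 c2 \<alpha> p l f = ennreal c1 * epowr (Gf h l) p + ennreal c2 * Jf \<alpha> p l h"
        "hardy_rhs \<alpha> p l f = Rf \<alpha> p l h"
        using reduce[OF adm l0] by metis
      show ?thesis unfolding h(3,4) by (rule mainB[OF h(1,2) a p0 p l])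
    qed
    have ii: "\<exists>f. admissible l f \<and> hardy_lhs c (\<alpha> powr p) \<alpha> p l f < hardy_rhs \<alpha> p l f"
      if c: "c < \<alpha> powr (p - 1)" for c
    proof -
      define c0 where "c0 = max 0 c"
      have c0: "0 \<le> c0" "c0 < \<alpha> powr (p - 1)" using c a unfolding c0_def by auto
      have ec: "hardy_lhs c c2 \<alpha> p l f = hardy_lhs c0 c2 \<alpha> p l f" for c2 f
        unfolding hardy_lhs_def c0_def by (simp add: ennreal_max_0)
      have "p * c0 < p * \<alpha> powr (p - 1)" using c0 p0 by simp
      then obtain b where b: "\<alpha> < b" "p * c0 < (b powr p - \<alpha> powr p) / (b - \<alpha>)"
        using exists_beta(2)[OF a] by blast
      have K: "0 < (b - \<alpha>) * p" using b p0 by simp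
      have "p * c0 * (b - \<alpha>) < b powr p - \<alpha> powr p" using b by (simp add: pos_less_divide_eq)
      then have ineq: "c0 + \<alpha> powr p * (1 / ((b - \<alpha>) * p)) < b powr p / ((b - \<alpha>) * p)"
        using K by (intro div_gt) (simp_all add: algebra_simps)
      have "hardy_lhs c0 (\<alpha> powr p) \<alpha> p l (fb b l) < hardy_rhs \<alpha> p l (fb b l)"
        unfolding vals(2,3)[OF b(1) c0(1) ap(1)]
        by (rule ennreal_lessI[OF le_less_trans[OF _ ineq] ineq]) (use K c0 in simp)
      then show ?thesis unfolding ec using vals(1)[OF b(1) c0(1) c0(1)] by blast
    qed
    have iii: "\<exists>f. admissible l f \<and> hardy_lhs (\<alpha> powr (p - 1)) c \<alpha> p l f < hardy_rhs \<alpha> p l f"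
      if c: "c < \<alpha> powr p" for c
    proof -
      define c0 where "c0 = max 0 c"
      have c0: "0 \<le> c0" "c0 < \<alpha> powr p" using c a unfolding c0_def by auto
      have ec: "hardy_lhs c1 c \<alpha> p l f = hardy_lhs c1 c0 \<alpha> p l f" for c1 f
        unfolding hardy_lhs_def c0_def by (simp add: ennreal_max_0)
      obtain b where b: "\<alpha> < b" "c0 < b powr p - \<alpha> powr (p - 1) * p * (b - \<alpha>)"
        using exists_beta(4)[OF a c0(2)] by blast
      have K: "0 < (b - \<alpha>) * p" using b p0 by simp
      have ineq: "\<alpha> powr (p - 1) + c0 * (1 / ((b - \<alpha>) * p)) < b powr p / ((b - \<alpha>) * p)"
        using K b(2) by (intro div_gt) (simp_all add: algebra_simps)
      have "hardy_lhs (\<alpha> powr (p - 1)) c0 \<alpha> p l (fb b l) < hardy_rhs \<alpha> p l (fb b l)"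
        unfolding vals(2,3)[OF b(1) ap(2) c0(1)]
        by (rule ennreal_lessI[OF le_less_trans[OF _ ineq] ineq]) (use K c0 in simp)
      then show ?thesis unfolding ec using vals(1)[OF b(1) c0(1) c0(1)] by blast
    qed
    show ?B using i ii iii by blast
  qed
  show ?thesis using A B by blast
qed

end
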